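(* Let $p$ be a prime, let $G$ be a finite group of $p$-power order, let $\varphi\colon A\to B$ be an isomorphism between subgroups $A,B$ of $G$, and let $G^*=\langle G,t\mid t^{-1}at=\varphi(a),\ a\in A\rangle$. If $G^*$ is residually $p$, then there exists a central filtration $(G_i)$ of $G$, compatible with $(G,\varphi)$, such that for all $i<j$, all $a\in A\cap G_i$ and all $b\in B\cap G_i$, the order of the automorphism of $H(G_i/G_j,\ c_b\circ\varphi_{ij}\circ c_a)$ induced by $c_b\circ\varphi_{ij}\circ c_a$ is a power of $p$.
   Context: A group is residually $p$ if for every non-trivial element there is a homomorphism to a finite $p$-group not killing it. A filtration of $G$ is a sequence $(G_1,\dots,G_n)$ of normal subgroups with $G=G_1\supsetneq\cdots\supsetneq G_n=\{1\}$, with $G_i=\{1\}$ for $i>n$; it is central if $G_i/G_{i+1}$ is central in $G/G_{i+1}$ for each $i$; it is compatible with $(G,\varphi)$ if $\varphi$ restricts to an isomorphism $A\cap G_i\to B\cap G_i$ for each $i$. For $i<j$, $\varphi_{ij}\colon (A\cap G_i)G_j/G_j\to (B\cap G_i)G_j/G_j$ is the isomorphism induced by $\varphi$. For $g\in G$, $c_g(x)=g^{-1}xg$; for $a\in A\cap G_i$ (resp. $b\in B\cap G_i$), $c_a$ (resp. $c_b$) denotes the induced automorphism of $(A\cap G_i)G_j/G_j$ (resp. $(B\cap G_i)G_j/G_j$), so $c_b\circ\varphi_{ij}\circ c_a$ is an isomorphism between subgroups of $G_i/G_j$. For a group $Q$ and an isomorphism $\psi\colon A'\to B'$ between subgroups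 of $Q$, the core $H(Q,\psi)$ is $\bigcap_k H_k$ where $H_0=A'\cap B'$ and $H_{k+1}=\psi^{-1}(H_k)\cap H_k\cap\psi(H_k)$ (with $\psi^{-1}(H_k)=\{a\in A':\psi(a)\in H_k\}$); $\psi$ restricts to an automorphism of $H(Q,\psi)$. *)

theory Defs
  imports "HOL-Algebra.Algebra" "HOL-Computational_Algebra.Primes"
begin

datatype 'g hnn_letter = Gen 'g | Tl | Tinv

inductive_set hnn_rel ::
  "('g, 'm) monoid_scheme \<Rightarrow> ('g \<Rightarrow> 'g) \<Rightarrow> 'g set \<Rightarrow> ('g hnn_letter list \<times> 'g hnn_letter list) set"
  for G :: "('g, 'm) monoid_scheme" and \<phi> :: "'g \<Rightarrow> 'g" and A :: "'g set"
where
  refl: "(w, w) \<in> hnn_rel G \<phi> A"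
| sym: "(u, v) \<in> hnn_rel G \<phi> A \<Longrightarrow> (v, u) \<in> hnn_rel G \<phi> A"
| trans: "(u, v) \<in> hnn_rel G \<phi> A \<Longrightarrow> (v, w) \<in> hnn_rel G \<phi> A \<Longrightarrow> (u, w) \<in> hnn_rel G \<phi> A"
| cong: "(u, v) \<in> hnn_rel G \<phi> A \<Longrightarrow> (x @ u @ y, x @ v @ y) \<in> hnn_rel G \<phi> A"
| one: "([Gen \<one>\<^bsub>G\<^esub>], []) \<in> hnn_rel G \<phi> A"
| mult: "g \<in> carrier G \<Longrightarrow> h \<in> carrier G \<Longrightarrow> ([Gen g, Gen h], [Gen (g \<otimes>\<^bsub>G\<^esub> h)]) \<in> hnn_rel G \<phi> A"
| t_tinv: "([Tl, Tinv], []) \<in> hnn_rel G \<phi> A"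
| tinv_t: "([Tinv, Tl], []) \<in> hnn_rel G \<phi> A"
| conj: "a \<in> A \<Longrightarrow> ([Tinv, Gen a, Tl], [Gen (\<phi> a)]) \<in> hnn_rel G \<phi> A"

definition hnn_words :: "('g, 'm) monoid_scheme \<Rightarrow> 'g hnn_letter list set" where
  "hnn_words G = {w. \<forall>l\<in>set w. (case l of Gen g \<Rightarrow> g \<in> carrier G | _ \<Rightarrow> True)}"

definition hnn_mult :: "('g, 'm) monoid_scheme \<Rightarrow> ('g \<Rightarrow> 'g) \<Rightarrow> 'g set \<Rightarrow>
    'g hnn_letter list set \<Rightarrow> 'g hnn_letter list set \<Rightarrow> 'g hnn_letter list set" where
  "hnn_mult G \<phi> A U V = Union ((\<lambda>(u, v). hnn_rel G \<phi> A `` {u @ v}) ` (Sigma U (\<lambda>_. V)))"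

definition HNN :: "('g, 'm) monoid_scheme \<Rightarrow> ('g \<Rightarrow> 'g) \<Rightarrow> 'g set \<Rightarrow> 'g hnn_letter list set monoid" where
  "HNN G \<phi> A =
    \<lparr> carrier = (\<lambda>w. hnn_rel G \<phi> A `` {w}) ` hnn_words G,
      monoid.mult = hnn_mult G \<phi> A,
      monoid.one = hnn_rel G \<phi> A `` {[]} \<rparr>"

text \<open>Every non-trivial element survives in some homomorphism to a finite p-group.
  (Target groups are taken with carrier type 'a set; every finite quotient of H
  has this type, so this is no restriction.)\<close>
definition residually_p :: "nat \<Rightarrow> 'a monoid \<Rightarrow> bool" where
  "residually_p p H \<longleftrightarrow>
     (\<forall>x\<in>carrier H. x \<noteq> \<one>\<^bsub>H\<^esub> \<longrightarrow>
        (\<exists>(P :: 'a set monoid) h. group P \<and> finite (carrier P) \<and> (\<exists>k. order P = p ^ k)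
            \<and> h \<in> hom H P \<and> h x \<noteq> \<one>\<^bsub>P\<^esub>))"

section \<open>Filtrations (indexed from 1)\<close>

definition filtration :: "('g, 'm) monoid_scheme \<Rightarrow> (nat \<Rightarrow> 'g set) \<Rightarrow> nat \<Rightarrow> bool" where
  "filtration G Gs n \<longleftrightarrow>
     1 \<le> n \<and> Gs 1 = carrier G \<and> Gs n = {\<one>\<^bsub>G\<^esub>}
     \<and> (\<forall>i. 1 \<le> i \<and> i < n \<longrightarrow> Gs (Suc i) \<subset> Gs i)
     \<and> (\<forall>i. n < i \<longrightarrow> Gs i = {\<one>\<^bsub>G\<^esub>})
     \<and> (\<forall>i. 1 \<le> i \<longrightarrow> Gs i \<lhd> G)"

text \<open>G_i/G_{i+1} is central in G/G_{i+1}: cosets of G_{i+1} of elements of G_i commute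
  with all cosets of G_{i+1}.\<close>
definition central_filtration :: "('g, 'm) monoid_scheme \<Rightarrow> (nat \<Rightarrow> 'g set) \<Rightarrow> nat \<Rightarrow> bool" where
  "central_filtration G Gs n \<longleftrightarrow>
     filtration G Gs n \<and>
     (\<forall>i. 1 \<le> i \<longrightarrow> (\<forall>x\<in>Gs i. \<forall>g\<in>carrier G.
         Gs (Suc i) #>\<^bsub>G\<^esub> (x \<otimes>\<^bsub>G\<^esub> g) = Gs (Suc i) #>\<^bsub>G\<^esub> (g \<otimes>\<^bsub>G\<^esub> x)))"

definition compatible ::
  "('g, 'm) monoid_scheme \<Rightarrow> ('g \<Rightarrow> 'g) \<Rightarrow> 'g set \<Rightarrow> 'g set \<Rightarrow> (nat \<Rightarrow> 'g set) \<Rightarrow> bool" where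
  "compatible G \<phi> A B Gs \<longleftrightarrow>
     (\<forall>i. 1 \<le> i \<longrightarrow> \<phi> \<in> iso (G\<lparr>carrier := A \<inter> Gs i\<rparr>) (G\<lparr>carrier := B \<inter> Gs i\<rparr>))"

text \<open>(A \<inter> G_i)G_j/G_j, as the set of cosets G_j x, x in A \<inter> G_i.\<close>
definition sub_quot :: "('g, 'm) monoid_scheme \<Rightarrow> 'g set \<Rightarrow> 'g set \<Rightarrow> 'g set \<Rightarrow> 'g set set" where
  "sub_quot G A Gi Gj = (\<lambda>x. Gj #>\<^bsub>G\<^esub> x) ` (A \<inter> Gi)"

text \<open>c_b o phi_ij o c_a : G_j x \<mapsto> G_j (b^-1 phi(a^-1 x a) b), for x in A \<inter> G_i.\<close>
definition twisted_map ::
  "('g, 'm) monoid_scheme \<Rightarrow> ('g \<Rightarrow> 'g) \<Rightarrow> 'g set \<Rightarrow> 'g set \<Rightarrow> 'g set \<Rightarrow> 'g \<Rightarrow> 'g \<Rightarrow> 'g set \<Rightarrow> 'g set" where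
  "twisted_map G \<phi> A Gi Gj a b C =
     Gj #>\<^bsub>G\<^esub> (inv\<^bsub>G\<^esub> b \<otimes>\<^bsub>G\<^esub>
        \<phi> (inv\<^bsub>G\<^esub> a \<otimes>\<^bsub>G\<^esub> (SOME x. x \<in> A \<inter> Gi \<and> C = Gj #>\<^bsub>G\<^esub> x) \<otimes>\<^bsub>G\<^esub> a) \<otimes>\<^bsub>G\<^esub> b)"

primrec core_seq :: "'q set \<Rightarrow> 'q set \<Rightarrow> ('q \<Rightarrow> 'q) \<Rightarrow> nat \<Rightarrow> 'q set" where
  "core_seq A' B' \<psi> 0 = A' \<inter> B'"
| "core_seq A' B' \<psi> (Suc k) =
     {x \<in> A'. \<psi> x \<in> core_seq A' B' \<psi> k} \<inter> core_seq A' B' \<psi> k \<inter> \<psi> ` core_seq A' B' \<psi> k"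

definition core :: "'q set \<Rightarrow> 'q set \<Rightarrow> ('q \<Rightarrow> 'q) \<Rightarrow> 'q set" where
  "core A' B' \<psi> = Inter (range (core_seq A' B' \<psi>))"

definition aut_order :: "'q set \<Rightarrow> ('q \<Rightarrow> 'q) \<Rightarrow> nat" where
  "aut_order H \<psi> = (LEAST n. 0 < n \<and> (\<forall>x\<in>H. (\<psi> ^^ n) x = x))"

end

theory Submission
  imports Defs "HOL-Algebra.Multiplicative_Group"
begin


lemma pgroup_center:
  fixes Q (structure) and p :: nat
  assumes grp: "group Q" and fin: "finite (carrier Q)" and ord: "order Q = p ^ e"
    and pr: "Factorial_Ring.prime p" and e: "e > 0"
  shows "\<exists>z\<in>carrier Q. z \<noteq> \<one>\<^bsub>Q\<^esub> \<and> (\<forall>y\<in>carrier Q. z \<otimes>\<^bsub>Q\<^esub> y = y \<otimes>\<^bsub>Q\<^esub> z)"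
proof (rule ccontr)
  assume nz: "\<not> ?thesis"
  interpret group Q by (rule grp)
  define act where "act = (\<lambda>g. (\<lambda>h \<in> carrier Q. g \<otimes> h \<otimes> (inv g)))"
  interpret A: group_action Q "carrier Q" act
    unfolding act_def by (rule action_by_conjugation)
  define Zc where "Zc = {x\<in>carrier Q. \<forall>y\<in>carrier Q. x \<otimes> y = y \<otimes> x}"
  have Zc1: "Zc = {\<one>}" using nz unfolding Zc_def by auto
  have orb_single: "orbit Q act x = {x} \<longleftrightarrow> x \<in> Zc" if x: "x \<in> carrier Q" for x
  proof
    assume ob: "orbit Q act x = {x}"
    have "y \<otimes> x = x \<otimes> y" if y: "y \<in> carrier Q" for y
    proof -
      have "act y x \<in> orbit Q act x" unfolding orbit_def using y by blast
      hence "y \<otimes> x \<otimes> inv y = x" using ob x unfolding act_def by auto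
      thus ?thesis using x y by (metis inv_solve_right m_closed)
    qed
    thus "x \<in> Zc" using x unfolding Zc_def by auto
  next
    assume xz: "x \<in> Zc"
    have "act g x = x" if g: "g \<in> carrier Q" for g
      using xz g x unfolding Zc_def act_def by (simp add: m_assoc flip: m_assoc[of g "inv g"])
    moreover have "act \<one> x = x" using x unfolding act_def by simp
    ultimately show "orbit Q act x = {x}" unfolding orbit_def using one_closed by (auto intro!: exI[of _ "\<one>"])
  qed
  have orb_fin: "finite (orbit Q act x)" if "x \<in> carrier Q" for x
  proof -
    have "orbit Q act x \<subseteq> carrier Q" using A.element_image that unfolding orbit_def by blast
    thus ?thesis using fin finite_subset by blast
  qed
  have orb_card: "card (orbit Q act x) dvd p ^ e" if x: "x \<in> carrier Q" for x
    using A.orbit_stabilizer_theorem[OF x] ord by (metis dvd_triv_left)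
  let ?O = "orbits Q (carrier Q) act"
  have finO: "finite ?O" unfolding orbits_def using fin by simp
  have sumO: "(\<Sum>ob\<in>?O. card ob) = order Q"
  proof -
    have "(\<Sum>ob\<in>?O. card ob) = (\<Sum>ob\<in>?O. \<Sum>x\<in>ob. 1)" 
      by (intro sum.cong) auto
    also have "\<dots> = (\<Sum>x\<in>carrier Q. 1)" using A.disjoint_sum[OF fin] .
    finally show ?thesis unfolding order_def by simp
  qed
  define O1 where "O1 = {ob\<in>?O. card ob = 1}"
  have O1eq: "O1 = {{\<one>}}"
  proof -
    have "ob \<in> O1 \<longleftrightarrow> ob = {\<one>}" for ob
    proof
      assume "ob \<in> O1"
      then obtain x where x: "x \<in> carrier Q" "ob = orbit Q act x" "card ob = 1"
        unfolding O1_def orbits_def by auto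
      have "x \<in> ob" using x A.orbit_refl by auto
      hence "ob = {x}" using x(3) by (metis card_1_singletonE singletonD)
      hence "x \<in> Zc" using orb_single x by auto
      thus "ob = {\<one>}" using Zc1 \<open>ob = {x}\<close> by auto
    next
      assume ob: "ob = {\<one>}"
      have "\<one> \<in> Zc" unfolding Zc_def by auto
      hence "orbit Q act \<one> = {\<one>}" using orb_single by auto
      thus "ob \<in> O1" unfolding O1_def orbits_def using ob by auto
    qed
    thus ?thesis by auto
  qed
  have "p dvd (\<Sum>ob\<in>?O - O1. card ob)"
  proof (rule dvd_sum)
    fix ob assume ob: "ob \<in> ?O - O1"
    then obtain x where x: "x \<in> carrier Q" "ob = orbit Q act x" unfolding orbits_def by auto
    have "card ob \<noteq> 1" using ob unfolding O1_def by auto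
    moreover obtain i where "i \<le> e" "card ob = p ^ i"
      using orb_card[OF x(1)] x(2) divides_primepow_nat[OF pr] by auto
    ultimately show "p dvd card ob" by (cases i) auto
  qed
  moreover have "(\<Sum>ob\<in>?O. card ob) = (\<Sum>ob\<in>O1. card ob) + (\<Sum>ob\<in>?O - O1. card ob)"
    using finO O1_def by (metis (no_types, lifting) mem_Collect_eq subsetI sum.subset_diff add.commute)
  moreover have "(\<Sum>ob\<in>O1. card ob) = 1" using O1eq by simp
  moreover have "p dvd order Q" using ord e by simp
  ultimately have "p dvd 1" using sumO by (metis dvd_add_left_iff)
  thus False using pr by simp
qed



definition zcen :: "('a, 'b) monoid_scheme \<Rightarrow> 'a set \<Rightarrow> 'a set" where
  "zcen P Z = {x \<in> carrier P. \<forall>y\<in>carrier P. Z #>\<^bsub>P\<^esub> (x \<otimes>\<^bsub>P\<^esub> y) = Z #>\<^bsub>P\<^esub> (y \<otimes>\<^bsub>P\<^esub> x)}"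

declare mult_FactGroup[simp del]

lemma (in group) comm_inv_left:
  assumes x: "x \<in> carrier G" and y: "y \<in> carrier G" and c: "x \<otimes> y = y \<otimes> x"
  shows "inv x \<otimes> y = y \<otimes> inv x"
proof -
  have "inv x \<otimes> y = inv x \<otimes> (y \<otimes> x) \<otimes> inv x" using x y by (simp add: m_assoc)
  also have "\<dots> = inv x \<otimes> (x \<otimes> y) \<otimes> inv x" using c by simp
  also have "\<dots> = y \<otimes> inv x" using x y by (metis l_inv l_one m_assoc inv_closed m_closed)
  finally show ?thesis .
qed

lemma zcen_normal:
  fixes P (structure)
  assumes "Z \<lhd> P"
  shows "zcen P Z \<lhd> P" "Z \<subseteq> zcen P Z"
proof -
  interpret N: normal Z P by fact
  interpret Q: group "P Mod Z" by (rule N.factorgroup_is_group)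
  interpret h: group_hom P "P Mod Z" "r_coset P Z"
    unfolding group_hom_def group_hom_axioms_def using N.r_coset_hom_Mod N.is_group Q.is_group by auto
  have key: "x \<in> zcen P Z \<longleftrightarrow> x \<in> carrier P \<and> (\<forall>y\<in>carrier P. 
     (Z #> x) \<otimes>\<^bsub>P Mod Z\<^esub> (Z #> y) = (Z #> y) \<otimes>\<^bsub>P Mod Z\<^esub> (Z #> x))" for x
    unfolding zcen_def by (auto simp flip: h.hom_mult)
  have hc: "Z #> x \<in> carrier (P Mod Z)" if "x \<in> carrier P" for x using that by simp
  have sub: "subgroup (zcen P Z) P"
  proof (rule N.subgroupI)
    show "zcen P Z \<subseteq> carrier P" unfolding zcen_def by auto
    have "\<one> \<in> zcen P Z" unfolding key using hc by (simp add: h.hom_one del: one_FactGroup)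
    thus "zcen P Z \<noteq> {}" by auto
  next
    fix a assume a: "a \<in> zcen P Z"
    hence ac: "a \<in> carrier P" using key by auto
    show "inv a \<in> zcen P Z" unfolding key
    proof (intro conjI ballI)
      show "inv a \<in> carrier P" using ac by simp
      fix y assume y: "y \<in> carrier P"
      have c: "(Z #> a) \<otimes>\<^bsub>P Mod Z\<^esub> (Z #> y) = (Z #> y) \<otimes>\<^bsub>P Mod Z\<^esub> (Z #> a)"
        using a y key by auto
      show "(Z #> inv a) \<otimes>\<^bsub>P Mod Z\<^esub> (Z #> y) = (Z #> y) \<otimes>\<^bsub>P Mod Z\<^esub> (Z #> inv a)"
        using c hc[OF ac] hc[OF y] by (simp add: h.hom_inv[OF ac] Q.comm_inv_left)
    qed
  next
    fix a b assume a: "a \<in> zcen P Z" and b: "b \<in> zcen P Z"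
    hence ac: "a \<in> carrier P" and bc: "b \<in> carrier P" using key by auto
    show "a \<otimes> b \<in> zcen P Z" unfolding key
    proof (intro conjI ballI)
      show "a \<otimes> b \<in> carrier P" using ac bc by simp
      fix y assume y: "y \<in> carrier P"
      have ca: "(Z #> a) \<otimes>\<^bsub>P Mod Z\<^esub> (Z #> y) = (Z #> y) \<otimes>\<^bsub>P Mod Z\<^esub> (Z #> a)"
        using a y key by auto
      have cb: "(Z #> b) \<otimes>\<^bsub>P Mod Z\<^esub> (Z #> y) = (Z #> y) \<otimes>\<^bsub>P Mod Z\<^esub> (Z #> b)"
        using b y key by auto
      let ?a = "Z #> a" and ?b = "Z #> b" and ?y = "Z #> y"
      have "(Z #> (a \<otimes> b)) \<otimes>\<^bsub>P Mod Z\<^esub> ?y = ?a \<otimes>\<^bsub>P Mod Z\<^esub> (?b \<otimes>\<^bsub>P Mod Z\<^esub> ?y)"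
        using hc[OF ac] hc[OF bc] hc[OF y] by (simp add: h.hom_mult[OF ac bc] Q.m_assoc)
      also have "\<dots> = (?a \<otimes>\<^bsub>P Mod Z\<^esub> ?y) \<otimes>\<^bsub>P Mod Z\<^esub> ?b"
        using hc[OF ac] hc[OF bc] hc[OF y] cb by (simp add: Q.m_assoc)
      also have "\<dots> = ?y \<otimes>\<^bsub>P Mod Z\<^esub> (Z #> (a \<otimes> b))"
        using hc[OF ac] hc[OF bc] hc[OF y] ca by (simp add: h.hom_mult[OF ac bc] Q.m_assoc)
      finally show "(Z #> (a \<otimes> b)) \<otimes>\<^bsub>P Mod Z\<^esub> (Z #> y) = (Z #> y) \<otimes>\<^bsub>P Mod Z\<^esub> (Z #> (a \<otimes> b))" .
    qed
  qed
  show "zcen P Z \<lhd> P" unfolding N.normal_inv_iff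
  proof (intro conjI ballI sub)
    fix g a assume g: "g \<in> carrier P" and a: "a \<in> zcen P Z"
    hence ac: "a \<in> carrier P" using key by auto
    have ca: "(Z #> a) \<otimes>\<^bsub>P Mod Z\<^esub> (Z #> y) = (Z #> y) \<otimes>\<^bsub>P Mod Z\<^esub> (Z #> a)" if "y \<in> carrier P" for y
      using a that key by auto
    have "Z #> (g \<otimes> a \<otimes> inv g) = (Z #> g) \<otimes>\<^bsub>P Mod Z\<^esub> (Z #> a) \<otimes>\<^bsub>P Mod Z\<^esub> inv\<^bsub>P Mod Z\<^esub> (Z #> g)"
      using g ac by (simp add: h.hom_mult h.hom_inv)
    also have "\<dots> = (Z #> a) \<otimes>\<^bsub>P Mod Z\<^esub> ((Z #> g) \<otimes>\<^bsub>P Mod Z\<^esub> inv\<^bsub>P Mod Z\<^esub> (Z #> g))"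
      using ca[OF g] hc[OF ac] hc[OF g] by (metis Q.m_assoc Q.inv_closed)
    also have "\<dots> = Z #> a" using hc[OF ac] hc[OF g] by (simp del: one_FactGroup)
    finally have e: "Z #> (g \<otimes> a \<otimes> inv g) = Z #> a" .
    show "g \<otimes> a \<otimes> inv g \<in> zcen P Z" unfolding key
      using g ac ca by (simp add: e)
  qed
  show "Z \<subseteq> zcen P Z"
  proof
    fix z assume z: "z \<in> Z"
    hence zc: "z \<in> carrier P" by (meson N.subset subsetD)
    have "Z #> z = Z" using N.coset_join2[OF zc N.subgroup_axioms z] .
    hence "Z #> z = \<one>\<^bsub>P Mod Z\<^esub>" by (simp add: one_FactGroup)
    thus "z \<in> zcen P Z" unfolding key using zc hc by (simp del: one_FactGroup)
  qed
qed



lemma zcen_strict: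
  fixes P (structure) and p :: nat
  assumes N: "Z \<lhd> P" and fin: "finite (carrier P)" and ord: "order P = p ^ e"
    and pr: "Factorial_Ring.prime p" and ne: "Z \<noteq> carrier P"
  shows "\<exists>x\<in>zcen P Z. x \<notin> Z"
proof -
  interpret N: normal Z P by fact
  interpret Q: group "P Mod Z" by (rule N.factorgroup_is_group)
  interpret h: group_hom P "P Mod Z" "r_coset P Z"
    unfolding group_hom_def group_hom_axioms_def using N.r_coset_hom_Mod N.is_group Q.is_group by auto
  have cQ: "carrier (P Mod Z) = rcosets Z" unfolding carrier_FactGroup RCOSETS_def by auto
  have lag: "card (rcosets Z) * card Z = p ^ e" using N.lagrange[OF N.subgroup_axioms] ord by simp
  then obtain i where i: "i \<le> e" "card (rcosets Z) = p ^ i"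
    using divides_primepow_nat[OF pr] by (metis dvd_triv_left)
  have "i \<noteq> 0"
  proof
    assume "i = 0"
    hence "card Z = card (carrier P)" using lag i ord unfolding order_def by simp
    thus False using ne fin N.subset by (metis card_subset_eq)
  qed
  hence "e > 0" using i by simp
  moreover have "finite (carrier (P Mod Z))" unfolding carrier_FactGroup using fin by simp
  moreover have "order (P Mod Z) = p ^ i" unfolding order_def cQ using i by simp
  ultimately obtain z where z: "z \<in> carrier (P Mod Z)" "z \<noteq> \<one>\<^bsub>P Mod Z\<^esub>"
    "\<forall>y\<in>carrier (P Mod Z). z \<otimes>\<^bsub>P Mod Z\<^esub> y = y \<otimes>\<^bsub>P Mod Z\<^esub> z"
    using pgroup_center[OF Q.is_group _ _ pr \<open>i \<noteq> 0\<close>[unfolded neq0_conv]] by blast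
  obtain x where x: "x \<in> carrier P" "z = Z #> x" using z(1) unfolding carrier_FactGroup by auto
  have "x \<notin> Z"
  proof
    assume "x \<in> Z"
    hence "Z #> x = Z" using N.coset_join2[OF x(1) N.subgroup_axioms] by simp
    thus False using z(2) x(2) by (simp add: one_FactGroup)
  qed
  moreover have "x \<in> zcen P Z" unfolding zcen_def
  proof (intro CollectI conjI ballI x(1))
    fix y assume y: "y \<in> carrier P"
    have "Z #> y \<in> carrier (P Mod Z)" using y by simp
    thus "Z #> (x \<otimes> y) = Z #> (y \<otimes> x)" using z(3) x y by (simp add: h.hom_mult)
  qed
  ultimately show ?thesis by blast
qed

primrec ucs :: "('a, 'b) monoid_scheme \<Rightarrow> nat \<Rightarrow> 'a set" where
  "ucs P 0 = {\<one>\<^bsub>P\<^esub>}"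
| "ucs P (Suc k) = zcen P (ucs P k)"

lemma ucs_normal: "group P \<Longrightarrow> ucs P k \<lhd> P"
  by (induction k) (auto intro: group.one_is_normal zcen_normal)

lemma ucs_Suc_mono: "group P \<Longrightarrow> ucs P k \<subseteq> ucs P (Suc k)"
  using zcen_normal(2)[OF ucs_normal] by simp

lemma ucs_mono: assumes "group P" "k \<le> l" shows "ucs P k \<subseteq> ucs P l"
  using assms(2)
proof (induction l)
  case (Suc l) thus ?case using ucs_Suc_mono[OF assms(1), of l] by (cases "k = Suc l") auto
qed simp

lemma ucs_top:
  fixes P (structure) and p :: nat
  assumes grp: "group P" and fin: "finite (carrier P)" and ord: "order P = p ^ e"
    and pr: "Factorial_Ring.prime p"
  shows "ucs P (order P) = carrier P"
proof -
  have sub: "ucs P k \<subseteq> carrier P" for k using ucs_normal[OF grp] normal_imp_subgroup subgroup.subset by blast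
  have "ucs P k = carrier P \<or> k < card (ucs P k)" for k
  proof (induction k)
    case 0 thus ?case by simp
  next
    case (Suc k)
    show ?case
    proof (cases "ucs P k = carrier P")
      case True
      thus ?thesis using ucs_Suc_mono[OF grp, of k] sub[of "Suc k"] by auto
    next
      case False
      obtain x where "x \<in> zcen P (ucs P k)" "x \<notin> ucs P k"
        using zcen_strict[OF ucs_normal[OF grp] fin ord pr False] by blast
      hence "ucs P k \<subset> ucs P (Suc k)" using ucs_Suc_mono[OF grp, of k] by auto
      hence "card (ucs P k) < card (ucs P (Suc k))"
        using sub fin by (meson finite_subset psubset_card_mono)
      thus ?thesis using Suc False by simp
    qed
  qed
  moreover have "card (ucs P k) \<le> order P" for k
    unfolding order_def using sub fin by (simp add: card_mono)
  ultimately show ?thesis by (meson leD)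
qed



definition rep :: "'a set \<Rightarrow> 'a" where "rep C = (SOME y. y \<in> C)"

definition Smap :: "('a, 'b) monoid_scheme \<Rightarrow> 'a set \<Rightarrow> ('a \<Rightarrow> 'a) \<Rightarrow> ('a set \<Rightarrow> 'a set) \<Rightarrow> 'a \<Rightarrow> 'a" where
  "Smap G K \<theta> \<gamma> x = \<theta> (x \<otimes>\<^bsub>G\<^esub> inv\<^bsub>G\<^esub> (rep (K #>\<^bsub>G\<^esub> x))) \<otimes>\<^bsub>G\<^esub> rep (\<gamma> (K #>\<^bsub>G\<^esub> x))"

lemma rep_rcos:
  fixes G (structure)
  assumes "group G" "subgroup K G" "x \<in> carrier G"
  shows "rep (K #> x) \<in> K #> x" "rep (K #> x) \<in> carrier G" "K #> rep (K #> x) = K #> x"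
    "x \<otimes> inv (rep (K #> x)) \<in> K"
proof -
  interpret group G by fact
  have "x \<in> K #> x" by (rule rcos_self[OF assms(3,2)])
  thus r: "rep (K #> x) \<in> K #> x" unfolding rep_def by (rule someI)
  thus rc: "rep (K #> x) \<in> carrier G" using r_coset_subset_G[OF subgroup.subset[OF assms(2)] assms(3)] by blast
  show "K #> rep (K #> x) = K #> x" using repr_independence[OF r assms(3,2)] by (simp only: eq_commute)
  have "rep (K #> x) \<otimes> inv x \<in> K" using subgroup.rcos_module_imp[OF assms(2,1,3) r] .
  hence "inv (rep (K #> x) \<otimes> inv x) \<in> K" by (rule subgroup.m_inv_closed[OF assms(2)])
  thus "x \<otimes> inv (rep (K #> x)) \<in> K" using rc assms(3) by (simp add: inv_mult_group)
qed

lemma rep_rcosets: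
  fixes G (structure)
  assumes "group G" "subgroup K G" "C \<in> rcosets K"
  shows "rep C \<in> carrier G" "C = K #> rep C"
proof -
  obtain x where x: "x \<in> carrier G" "C = K #> x" using assms(3) unfolding RCOSETS_def by auto
  show "rep C \<in> carrier G" "C = K #> rep C" using rep_rcos[OF assms(1,2) x(1)] x(2) by auto
qed

lemma rcos_left_mult:
  fixes G (structure)
  assumes "group G" "subgroup K G" "k \<in> K" "x \<in> carrier G"
  shows "K #> (k \<otimes> x) = K #> x"
proof -
  interpret group G by fact
  have kc: "k \<in> carrier G" using assms subgroup.subset by blast
  have "(k \<otimes> x) \<otimes> inv x \<in> K" using kc assms(3,4) by (simp add: m_assoc)
  hence "k \<otimes> x \<in> K #> x" using subgroup.rcos_module_rev[OF assms(2,1,4)] kc assms(4) by simp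
  from repr_independence[OF this assms(4,2)] show ?thesis by metis
qed

lemma Smap_props:
  fixes G (structure)
  assumes grp: "group G" and K: "subgroup K G" and L: "subgroup L G"
    and th: "\<theta> ` K \<subseteq> L" and ga: "\<gamma> ` (rcosets K) \<subseteq> (rcosets L)" and x: "x \<in> carrier G"
  shows "Smap G K \<theta> \<gamma> x \<in> carrier G" "L #> Smap G K \<theta> \<gamma> x = \<gamma> (K #> x)"
proof -
  interpret group G by fact
  have k: "x \<otimes> inv (rep (K #> x)) \<in> K" using rep_rcos[OF grp K x] by simp
  hence tk: "\<theta> (x \<otimes> inv (rep (K #> x))) \<in> L" using th by blast
  have C: "\<gamma> (K #> x) \<in> rcosets L" using ga x unfolding RCOSETS_def by blast
  note s = rep_rcosets[OF grp L C]
  have tkc: "\<theta> (x \<otimes> inv (rep (K #> x))) \<in> carrier G" using tk L subgroup.subset by blast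
  show "Smap G K \<theta> \<gamma> x \<in> carrier G" unfolding Smap_def using tkc s(1) by simp
  show "L #> Smap G K \<theta> \<gamma> x = \<gamma> (K #> x)" unfolding Smap_def
    using rcos_left_mult[OF grp L tk s(1)] s(2)[symmetric] by simp
qed

lemma Smap_hom:
  fixes G (structure)
  assumes grp: "group G" and K: "subgroup K G"
    and hom: "\<And>a b. a \<in> K \<Longrightarrow> b \<in> K \<Longrightarrow> \<theta> (a \<otimes> b) = \<theta> a \<otimes> \<theta> b"
    and L: "subgroup L G" and th: "\<theta> ` K \<subseteq> L" and ga: "\<gamma> ` (rcosets K) \<subseteq> (rcosets L)"
    and k: "k \<in> K" and x: "x \<in> carrier G"
  shows "Smap G K \<theta> \<gamma> (k \<otimes> x) = \<theta> k \<otimes> Smap G K \<theta> \<gamma> x"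
proof -
  interpret group G by fact
  have kc: "k \<in> carrier G" using k K subgroup.subset by blast
  have e: "K #> (k \<otimes> x) = K #> x" using rcos_left_mult[OF grp K k x] .
  have r: "x \<otimes> inv (rep (K #> x)) \<in> K" using rep_rcos[OF grp K x] by simp
  have rc: "rep (K #> x) \<in> carrier G" using rep_rcos[OF grp K x] by simp
  have "\<theta> (k \<otimes> x \<otimes> inv (rep (K #> x))) = \<theta> k \<otimes> \<theta> (x \<otimes> inv (rep (K #> x)))"
    using hom[OF k r] kc x rc by (simp add: m_assoc)
  moreover have "\<theta> k \<in> carrier G" "\<theta> (x \<otimes> inv (rep (K #> x))) \<in> carrier G"
    using th k r subgroup.subset[OF L] by auto
  moreover have C: "\<gamma> (K #> x) \<in> rcosets L" using ga x unfolding RCOSETS_def by blast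
  have "rep (\<gamma> (K #> x)) \<in> carrier G" using rep_rcosets(1)[OF grp L C] .
  ultimately show ?thesis unfolding Smap_def e
    by (simp add: m_assoc)
qed

lemma Smap_inv:
  fixes G (structure)
  assumes grp: "group G" and K: "subgroup K G" and L: "subgroup L G"
    and th: "\<theta> ` K \<subseteq> L" and ga: "\<gamma> ` (rcosets K) \<subseteq> (rcosets L)"
    and th2: "\<And>k. k \<in> K \<Longrightarrow> \<theta>2 (\<theta> k) = k"
    and ga2: "\<And>C. C \<in> rcosets K \<Longrightarrow> \<gamma>2 (\<gamma> C) = C"
    and x: "x \<in> carrier G"
  shows "Smap G L \<theta>2 \<gamma>2 (Smap G K \<theta> \<gamma> x) = x"
proof -
  interpret group G by fact
  let ?r = "rep (K #> x)" and ?s = "rep (\<gamma> (K #> x))" and ?k = "x \<otimes> inv (rep (K #> x))"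
  have k: "?k \<in> K" using rep_rcos[OF grp K x] by simp
  have rc: "?r \<in> carrier G" using rep_rcos[OF grp K x] by simp
  have Kx: "K #> x \<in> rcosets K" using x unfolding RCOSETS_def by blast
  have C: "\<gamma> (K #> x) \<in> rcosets L" using ga Kx by blast
  have sc: "?s \<in> carrier G" using rep_rcosets(1)[OF grp L C] .
  have tkc: "\<theta> ?k \<in> carrier G" using th k subgroup.subset[OF L] by auto
  have y: "Smap G K \<theta> \<gamma> x = \<theta> ?k \<otimes> ?s" unfolding Smap_def ..
  have Ly: "L #> Smap G K \<theta> \<gamma> x = \<gamma> (K #> x)" using Smap_props(2)[OF grp K L th ga x] .
  have "Smap G L \<theta>2 \<gamma>2 (Smap G K \<theta> \<gamma> x) = \<theta>2 (\<theta> ?k \<otimes> ?s \<otimes> inv ?s) \<otimes> rep (K #> x)"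
  proof -
    have Ly': "L #> (\<theta> ?k \<otimes> ?s) = \<gamma> (K #> x)" using Ly y by simp
    show ?thesis unfolding y Smap_def[of G L] Ly' ga2[OF Kx] ..
  qed
  also have "\<dots> = \<theta>2 (\<theta> ?k) \<otimes> ?r" using tkc sc by (simp add: m_assoc)
  also have "\<dots> = ?k \<otimes> ?r" using th2[OF k] by simp
  also have "\<dots> = x" using x rc by (simp add: m_assoc)
  finally show ?thesis .
qed



fun actl :: "('g, 'm) monoid_scheme \<Rightarrow> ('g \<Rightarrow> 'g) \<Rightarrow> ('g \<Rightarrow> 'g) \<Rightarrow> 'g hnn_letter \<Rightarrow> 'g \<Rightarrow> 'g" where
  "actl G s s' (Gen g) = (\<lambda>x. if g \<in> carrier G \<and> x \<in> carrier G then g \<otimes>\<^bsub>G\<^esub> x else x)"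
| "actl G s s' Tl = (\<lambda>x. if x \<in> carrier G then s x else x)"
| "actl G s s' Tinv = (\<lambda>x. if x \<in> carrier G then s' x else x)"

primrec Fw :: "('g, 'm) monoid_scheme \<Rightarrow> ('g \<Rightarrow> 'g) \<Rightarrow> ('g \<Rightarrow> 'g) \<Rightarrow> 'g hnn_letter list \<Rightarrow> 'g \<Rightarrow> 'g" where
  "Fw G s s' [] = id"
| "Fw G s s' (l # w) = actl G s s' l \<circ> Fw G s s' w"

lemma Fw_append: "Fw G s s' (u @ v) = Fw G s s' u \<circ> Fw G s s' v"
  by (induction u) auto

lemma hnn_rel_Fw:
  fixes G (structure)
  assumes rel: "(u, v) \<in> hnn_rel G \<phi> A"
    and grp: "group G" and Asub: "A \<subseteq> carrier G"
    and s: "\<And>x. x \<in> carrier G \<Longrightarrow> s x \<in> carrier G"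
    and s': "\<And>x. x \<in> carrier G \<Longrightarrow> s' x \<in> carrier G"
    and ss': "\<And>x. x \<in> carrier G \<Longrightarrow> s (s' x) = x"
    and s's: "\<And>x. x \<in> carrier G \<Longrightarrow> s' (s x) = x"
    and phic: "\<And>a. a \<in> A \<Longrightarrow> \<phi> a \<in> carrier G"
    and sphi: "\<And>a x. a \<in> A \<Longrightarrow> x \<in> carrier G \<Longrightarrow> s (\<phi> a \<otimes> x) = a \<otimes> s x"
  shows "Fw G s s' u = Fw G s s' v"
  using rel
proof (induction rule: hnn_rel.induct)
  case (cong u v x y)
  then show ?case by (simp add: Fw_append)
next
  case one
  show ?case by (rule ext) (simp add: group.is_monoid[OF grp])
next
  case (mult g h)
  interpret group G by fact
  show ?case by (rule ext) (simp add: mult m_assoc)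
next
  case t_tinv
  show ?case by (rule ext) (simp add: s' ss')
next
  case tinv_t
  show ?case by (rule ext) (simp add: s s's)
next
  case (conj a)
  have ac: "a \<in> carrier G" using conj Asub by auto
  show ?case
  proof (rule ext)
    fix x
    show "Fw G s s' [Tinv, Gen a, Tl] x = Fw G s s' [Gen (\<phi> a)] x"
    proof (cases "x \<in> carrier G")
      case True
      interpret group G by fact
      have e1: "s (\<phi> a \<otimes> x) = a \<otimes> s x" using sphi[OF conj True] .
      have c1: "\<phi> a \<otimes> x \<in> carrier G" using phic[OF conj] True by simp
      have e2: "s' (a \<otimes> s x) = \<phi> a \<otimes> x" using s's[OF c1] unfolding e1 .
      have c2: "a \<otimes> s x \<in> carrier G" using ac s[OF True] by simp
      have l: "Fw G s s' [Tinv, Gen a, Tl] x = s' (a \<otimes> s x)" using True s[OF True] ac c2 by simp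
      have r: "Fw G s s' [Gen (\<phi> a)] x = \<phi> a \<otimes> x" using True phic[OF conj] by simp
      show ?thesis unfolding l r e2 ..
    next
      case False
      thus ?thesis by simp
    qed
  qed
qed auto



lemma iso_sub_facts:
  fixes G (structure)
  assumes "\<phi> \<in> iso (G\<lparr>carrier := A\<rparr>) (G\<lparr>carrier := B\<rparr>)"
  shows "bij_betw \<phi> A B" "\<And>a b. a \<in> A \<Longrightarrow> b \<in> A \<Longrightarrow> \<phi> (a \<otimes> b) = \<phi> a \<otimes> \<phi> b"
  using assms unfolding iso_def hom_def by auto

lemma my_rcosets_finite:
  fixes G (structure)
  assumes "finite (carrier G)"
  shows "finite (rcosets H)"
proof -
  have "rcosets H = (\<lambda>x. H #> x) ` carrier G" unfolding RCOSETS_def by auto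
  thus ?thesis using assms by simp
qed

lemma hnn_gen_inj:
  fixes G (structure)
  assumes grp: "group G" and fin: "finite (carrier G)" and A: "subgroup A G" and B: "subgroup B G"
    and iso: "\<phi> \<in> iso (G\<lparr>carrier := A\<rparr>) (G\<lparr>carrier := B\<rparr>)"
    and g: "g \<in> carrier G" and rel: "([Gen g], []) \<in> hnn_rel G \<phi> A"
  shows "g = \<one>"
proof -
  interpret group G by fact
  note bij = iso_sub_facts(1)[OF iso]
  note homphi = iso_sub_facts(2)[OF iso]
  have Ac: "A \<subseteq> carrier G" by (rule subgroup.subset[OF A])
  have Bc: "B \<subseteq> carrier G" by (rule subgroup.subset[OF B])
  have phiA: "\<phi> ` A = B" using bij unfolding bij_betw_def by simp
  have injphi: "inj_on \<phi> A" using bij unfolding bij_betw_def by simp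
  define \<psi> where "\<psi> = inv_into A \<phi>"
  have psiB: "\<psi> ` B \<subseteq> A" unfolding \<psi>_def phiA[symmetric] by (rule image_subsetI, rule inv_into_into)
  have psiphi: "\<And>a. a \<in> A \<Longrightarrow> \<psi> (\<phi> a) = a" unfolding \<psi>_def by (rule inv_into_f_f[OF injphi])
  have phipsi: "\<And>b. b \<in> B \<Longrightarrow> \<phi> (\<psi> b) = b" unfolding \<psi>_def by (rule f_inv_into_f) (simp add: phiA)
  have phiAB: "\<phi> ` A \<subseteq> B" using phiA by simp
  have hompsi: "\<psi> (b1 \<otimes> b2) = \<psi> b1 \<otimes> \<psi> b2" if "b1 \<in> B" "b2 \<in> B" for b1 b2
  proof -
    have "\<psi> b1 \<in> A" "\<psi> b2 \<in> A" using psiB that by auto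
    hence "\<psi> b1 \<otimes> \<psi> b2 \<in> A" using subgroup.m_closed[OF A] by blast
    moreover have "\<phi> (\<psi> b1 \<otimes> \<psi> b2) = b1 \<otimes> b2" using homphi \<open>\<psi> b1 \<in> A\<close> \<open>\<psi> b2 \<in> A\<close> phipsi that by simp
    ultimately show ?thesis using psiphi[of "\<psi> b1 \<otimes> \<psi> b2"] by simp
  qed
  have cA: "card A = card B" using bij bij_betw_same_card by blast
  have fA: "finite A" using finite_subset[OF Ac fin] .
  have "\<one> \<in> A" using subgroup.one_closed[OF A] .
  hence posA: "card A > 0" using fA card_gt_0_iff by blast
  have "card (rcosets A) * card A = card (rcosets B) * card A"
    using lagrange[OF A] lagrange[OF B] cA by simp
  hence cR: "card (rcosets B) = card (rcosets A)" using posA by simp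
  obtain \<beta> where beta: "bij_betw \<beta> (rcosets B) (rcosets A)"
    using finite_same_card_bij[OF my_rcosets_finite[OF fin] my_rcosets_finite[OF fin] cR] by blast
  define \<beta>' where "\<beta>' = inv_into (rcosets B) \<beta>"
  have beta1: "\<beta> ` (rcosets B) \<subseteq> (rcosets A)" using bij_betw_imp_surj_on[OF beta] by simp
  have beta2: "\<beta>' ` (rcosets A) \<subseteq> (rcosets B)" unfolding \<beta>'_def using bij_betw_imp_surj_on[OF bij_betw_inv_into[OF beta]] by simp
  have bb1: "\<And>C. C \<in> rcosets B \<Longrightarrow> \<beta>' (\<beta> C) = C" unfolding \<beta>'_def
    by (rule bij_betw_inv_into_left[OF beta])
  have bb2: "\<And>C. C \<in> rcosets A \<Longrightarrow> \<beta> (\<beta>' C) = C" unfolding \<beta>'_def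
    by (rule bij_betw_inv_into_right[OF beta])
  define s where "s = Smap G B \<psi> \<beta>"
  define s' where "s' = Smap G A \<phi> \<beta>'"
  have sc: "\<And>x. x \<in> carrier G \<Longrightarrow> s x \<in> carrier G"
    unfolding s_def using Smap_props(1)[OF grp B A psiB beta1] by blast
  have s'c: "\<And>x. x \<in> carrier G \<Longrightarrow> s' x \<in> carrier G"
    unfolding s'_def using Smap_props(1)[OF grp A B phiAB beta2] by blast
  have s's: "\<And>x. x \<in> carrier G \<Longrightarrow> s' (s x) = x"
    unfolding s_def s'_def using Smap_inv[OF grp B A psiB beta1 phipsi bb1] by blast
  have ss': "\<And>x. x \<in> carrier G \<Longrightarrow> s (s' x) = x"
    unfolding s_def s'_def using Smap_inv[OF grp A B phiAB beta2 psiphi bb2] by blast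
  have phic: "\<And>a. a \<in> A \<Longrightarrow> \<phi> a \<in> carrier G" using phiAB Bc by blast
  have sphi: "\<And>a x. a \<in> A \<Longrightarrow> x \<in> carrier G \<Longrightarrow> s (\<phi> a \<otimes> x) = a \<otimes> s x"
  proof -
    fix a x assume a: "a \<in> A" and x: "x \<in> carrier G"
    have "\<phi> a \<in> B" using phiAB a by blast
    from Smap_hom[OF grp B hompsi A psiB beta1 this x] show "s (\<phi> a \<otimes> x) = a \<otimes> s x"
      unfolding s_def using psiphi[OF a] by simp
  qed
  have "Fw G s s' [Gen g] = Fw G s s' []"
    using hnn_rel_Fw[OF rel grp Ac sc s'c ss' s's phic sphi] .
  hence "Fw G s s' [Gen g] \<one> = Fw G s s' [] \<one>" by simp
  thus "g = \<one>" using g by simp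
qed



definition cls :: "('g, 'm) monoid_scheme \<Rightarrow> ('g \<Rightarrow> 'g) \<Rightarrow> 'g set \<Rightarrow> 'g hnn_letter list \<Rightarrow> 'g hnn_letter list set" where
  "cls G \<phi> A w = hnn_rel G \<phi> A `` {w}"

lemma rel_cls_eq:
  assumes "(u, v) \<in> hnn_rel G \<phi> A" shows "cls G \<phi> A u = cls G \<phi> A v"
proof -
  have "(u, x) \<in> hnn_rel G \<phi> A \<longleftrightarrow> (v, x) \<in> hnn_rel G \<phi> A" for x
    using hnn_rel.trans[OF assms, of x] hnn_rel.trans[OF hnn_rel.sym[OF assms], of x] by blast
  thus ?thesis unfolding cls_def by auto
qed

lemma cls_self: "w \<in> cls G \<phi> A w"
  unfolding cls_def using hnn_rel.refl by blast

lemma cls_mult: "hnn_mult G \<phi> A (cls G \<phi> A u) (cls G \<phi> A v) = cls G \<phi> A (u @ v)"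
proof -
  have "cls G \<phi> A (u' @ v') = cls G \<phi> A (u @ v)" if "u' \<in> cls G \<phi> A u" "v' \<in> cls G \<phi> A v" for u' v'
  proof -
    have 1: "(u, u') \<in> hnn_rel G \<phi> A" "(v, v') \<in> hnn_rel G \<phi> A" using that unfolding cls_def by auto
    have "([] @ u @ v, [] @ u' @ v) \<in> hnn_rel G \<phi> A" by (rule hnn_rel.cong[OF 1(1)])
    moreover have "(u' @ v @ [], u' @ v' @ []) \<in> hnn_rel G \<phi> A" by (rule hnn_rel.cong[OF 1(2)])
    ultimately have "(u @ v, u' @ v') \<in> hnn_rel G \<phi> A" using hnn_rel.trans by (metis append_Nil append_Nil2)
    from rel_cls_eq[OF this] show ?thesis by simp
  qed
  hence e: "\<And>z. z \<in> cls G \<phi> A u \<times> cls G \<phi> A v \<Longrightarrow> (\<lambda>(u', v'). cls G \<phi> A (u' @ v')) z = cls G \<phi> A (u @ v)" by auto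
  have "hnn_mult G \<phi> A (cls G \<phi> A u) (cls G \<phi> A v) = \<Union>((\<lambda>(u', v'). cls G \<phi> A (u' @ v')) ` (cls G \<phi> A u \<times> cls G \<phi> A v))"
    unfolding hnn_mult_def cls_def by simp
  also have "\<dots> = \<Union>((\<lambda>_. cls G \<phi> A (u @ v)) ` (cls G \<phi> A u \<times> cls G \<phi> A v))"
    using e by (metis (no_types, lifting) image_cong)
  also have "\<dots> = cls G \<phi> A (u @ v)" using cls_self[of u] cls_self[of v] by blast
  finally show ?thesis .
qed

lemma HNN_simps:
  "carrier (HNN G \<phi> A) = cls G \<phi> A ` hnn_words G"
  "x \<otimes>\<^bsub>HNN G \<phi> A\<^esub> y = hnn_mult G \<phi> A x y"
  "\<one>\<^bsub>HNN G \<phi> A\<^esub> = cls G \<phi> A []"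
  unfolding HNN_def cls_def by auto

lemma hnn_words_simps:
  "[] \<in> hnn_words G" "[Tl] \<in> hnn_words G" "[Tinv] \<in> hnn_words G"
  "([Gen x] \<in> hnn_words G) = (x \<in> carrier G)"
  "(u @ v \<in> hnn_words G) = (u \<in> hnn_words G \<and> v \<in> hnn_words G)"
  unfolding hnn_words_def by auto

declare hnn_words_simps[simp]

lemma hnn_words_Cons[simp]:
  "(Gen x # w \<in> hnn_words G) = (x \<in> carrier G \<and> w \<in> hnn_words G)"
  "(Tl # w \<in> hnn_words G) = (w \<in> hnn_words G)"
  "(Tinv # w \<in> hnn_words G) = (w \<in> hnn_words G)"
  unfolding hnn_words_def by auto

lemma hom_HNN:
  fixes P (structure)
  assumes grpP: "group P" and h: "h \<in> hom (HNN G \<phi> A) P"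
    and A: "A \<subseteq> carrier G" and phiA: "\<And>a. a \<in> A \<Longrightarrow> \<phi> a \<in> carrier G"
  shows "\<And>x. x \<in> carrier G \<Longrightarrow> h (cls G \<phi> A [Gen x]) \<in> carrier P"
    "h (cls G \<phi> A [Tl]) \<in> carrier P"
    "\<And>x y. x \<in> carrier G \<Longrightarrow> y \<in> carrier G \<Longrightarrow>
       h (cls G \<phi> A [Gen (x \<otimes>\<^bsub>G\<^esub> y)]) = h (cls G \<phi> A [Gen x]) \<otimes> h (cls G \<phi> A [Gen y])"
    "\<And>a. a \<in> A \<Longrightarrow> h (cls G \<phi> A [Gen (\<phi> a)]) =
        inv (h (cls G \<phi> A [Tl])) \<otimes> h (cls G \<phi> A [Gen a]) \<otimes> h (cls G \<phi> A [Tl])"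
proof -
  interpret group P by fact
  let ?c = "cls G \<phi> A"
  have hc: "\<And>w. w \<in> hnn_words G \<Longrightarrow> h (?c w) \<in> carrier P"
    using h unfolding hom_def HNN_simps by auto
  have hm: "\<And>u v. u \<in> hnn_words G \<Longrightarrow> v \<in> hnn_words G \<Longrightarrow> h (?c (u @ v)) = h (?c u) \<otimes> h (?c v)"
  proof -
    fix u v assume "u \<in> hnn_words G" "v \<in> hnn_words G"
    hence "?c u \<in> carrier (HNN G \<phi> A)" "?c v \<in> carrier (HNN G \<phi> A)" unfolding HNN_simps by auto
    hence "h (?c u \<otimes>\<^bsub>HNN G \<phi> A\<^esub> ?c v) = h (?c u) \<otimes> h (?c v)" using h unfolding hom_def by auto
    thus "h (?c (u @ v)) = h (?c u) \<otimes> h (?c v)" unfolding HNN_simps cls_mult .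
  qed
  show "\<And>x. x \<in> carrier G \<Longrightarrow> h (?c [Gen x]) \<in> carrier P" using hc by (simp add: hnn_words_simps)
  show tc: "h (?c [Tl]) \<in> carrier P" using hc by (simp add: hnn_words_simps)
  have tic: "h (?c [Tinv]) \<in> carrier P" using hc by (simp add: hnn_words_simps)
  show "\<And>x y. x \<in> carrier G \<Longrightarrow> y \<in> carrier G \<Longrightarrow>
       h (?c [Gen (x \<otimes>\<^bsub>G\<^esub> y)]) = h (?c [Gen x]) \<otimes> h (?c [Gen y])"
  proof -
    fix x y assume "x \<in> carrier G" "y \<in> carrier G"
    hence "?c [Gen (x \<otimes>\<^bsub>G\<^esub> y)] = ?c ([Gen x] @ [Gen y])" using rel_cls_eq[OF hnn_rel.mult[of x G y]] by simp
    thus "h (?c [Gen (x \<otimes>\<^bsub>G\<^esub> y)]) = h (?c [Gen x]) \<otimes> h (?c [Gen y])"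
      using hm[of "[Gen x]" "[Gen y]"] \<open>x \<in> carrier G\<close> \<open>y \<in> carrier G\<close> by (simp add: hnn_words_simps)
  qed
  have e1: "h (?c []) = \<one>"
  proof -
    have "h (?c []) = h (?c []) \<otimes> h (?c [])" using hm[of "[]" "[]"] hnn_words_simps by simp
    thus ?thesis using hc[of "[]"] hnn_words_simps by (metis l_cancel_one' one_closed r_one)
  qed
  have "h (?c [Tinv]) \<otimes> h (?c [Tl]) = \<one>"
  proof -
    have "?c [Tinv, Tl] = ?c []" by (rule rel_cls_eq[OF hnn_rel.tinv_t])
    thus ?thesis using hm[of "[Tinv]" "[Tl]"] hnn_words_simps e1 by simp
  qed
  hence ti: "h (?c [Tinv]) = inv (h (?c [Tl]))" using tc tic by (simp add: inv_equality)
  show "\<And>a. a \<in> A \<Longrightarrow> h (?c [Gen (\<phi> a)]) =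
        inv (h (?c [Tl])) \<otimes> h (?c [Gen a]) \<otimes> h (?c [Tl])"
  proof -
    fix a assume a: "a \<in> A"
    have e0: "?c [Gen (\<phi> a)] = ?c [Tinv, Gen a, Tl]" by (rule rel_cls_eq[OF hnn_rel.conj[OF a], symmetric])
    have ga: "[Gen a] \<in> hnn_words G" "a \<in> carrier G" using a A by auto
    have e: "h (?c [Tinv, Gen a, Tl]) = h (?c [Tinv]) \<otimes> (h (?c [Gen a]) \<otimes> h (?c [Tl]))"
      using hm[of "[Tinv]" "[Gen a, Tl]"] hm[of "[Gen a]" "[Tl]"] ga by simp
    have gc: "h (?c [Gen a]) \<in> carrier P" using hc ga by simp
    show "h (?c [Gen (\<phi> a)]) = inv (h (?c [Tl])) \<otimes> h (?c [Gen a]) \<otimes> h (?c [Tl])"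
      unfolding e0 e ti using gc tc by (simp add: m_assoc)
  qed
qed



lemma rcos_eq_iff:
  fixes G (structure)
  assumes "group G" "subgroup H G" "x \<in> carrier G" "y \<in> carrier G"
  shows "(H #> x = H #> y) \<longleftrightarrow> x \<otimes> inv y \<in> H"
proof
  interpret group G by fact
  assume e: "H #> x = H #> y"
  have "x \<in> H #> x" by (rule rcos_self[OF assms(3,2)])
  hence "x \<in> H #> y" using e by simp
  thus "x \<otimes> inv y \<in> H" by (rule subgroup.rcos_module_imp[OF assms(2,1,4)])
next
  interpret group G by fact
  assume "x \<otimes> inv y \<in> H"
  hence "x \<in> H #> y" by (rule subgroup.rcos_module_rev[OF assms(2,1,4,3)])
  from repr_independence[OF this assms(4,2)] show "H #> x = H #> y" by (simp only: eq_commute)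
qed

lemma (in group) cancel_rl [simp]:
  "x \<in> carrier G \<Longrightarrow> y \<in> carrier G \<Longrightarrow> x \<otimes> (inv x \<otimes> y) = y"
  by (metis inv_closed m_assoc r_inv l_one)

lemma (in group) cancel_lr [simp]:
  "x \<in> carrier G \<Longrightarrow> y \<in> carrier G \<Longrightarrow> inv x \<otimes> (x \<otimes> y) = y"
  by (metis inv_closed m_assoc l_inv l_one)

lemma (in group) conj_diff:
  assumes "z \<in> carrier G" "u \<in> carrier G" "c \<in> carrier G"
  shows "(inv c \<otimes> z \<otimes> c) \<otimes> inv (inv c \<otimes> u \<otimes> c) = inv c \<otimes> (z \<otimes> inv u) \<otimes> c"
  using assms by (simp add: inv_mult_group m_assoc)

lemma (in group) diff_split:
  assumes "z \<in> carrier G" "u \<in> carrier G" "w \<in> carrier G"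
  shows "z \<otimes> inv u = (z \<otimes> inv w) \<otimes> (w \<otimes> inv u)"
  using assms by (simp add: m_assoc)

lemma core_props:
  assumes "x \<in> core A' B' \<psi>"
  shows "\<psi> x \<in> core A' B' \<psi>" "x \<in> A'"
proof -
  have hx: "x \<in> core_seq A' B' \<psi> k" for k using assms unfolding core_def by auto
  have "\<psi> x \<in> core_seq A' B' \<psi> k" for k using hx[of "Suc k"] by auto
  thus "\<psi> x \<in> core A' B' \<psi>" unfolding core_def by auto
  show "x \<in> A'" using hx[of 0] by simp
qed

lemma core_funpow:
  assumes "x \<in> core A' B' \<psi>"
  shows "(\<psi> ^^ m) x \<in> core A' B' \<psi>"
  using assms by (induction m) (auto intro: core_props(1))

lemma aut_order_ppow:
  fixes p :: nat
  assumes M: "0 < M" and fx: "\<forall>x\<in>H. (\<psi> ^^ M) x = x" and pM: "M = p ^ K" and pr: "Factorial_Ring.prime p"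
  shows "\<exists>k. aut_order H \<psi> = p ^ k"
proof -
  let ?P = "\<lambda>n. 0 < n \<and> (\<forall>x\<in>H. (\<psi> ^^ n) x = x)"
  have PM: "?P M" using M fx by simp
  define d where "d = aut_order H \<psi>"
  have d: "d = (LEAST n. ?P n)" unfolding d_def aut_order_def ..
  have Pd: "?P d" unfolding d using PM by (rule LeastI)
  have mult: "(\<psi> ^^ (d * q)) x = x" if "x \<in> H" for q x
  proof (induction q)
    case (Suc q)
    have "\<psi> ^^ (d * Suc q) = (\<psi> ^^ d) \<circ> (\<psi> ^^ (d * q))" by (simp add: funpow_add)
    thus ?case using Suc Pd that by simp
  qed simp
  have "M mod d = 0"
  proof (rule ccontr)
    assume ne: "M mod d \<noteq> 0"
    have "?P (M mod d)"
    proof (intro conjI ballI)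
      show "0 < M mod d" using ne by simp
      fix x assume x: "x \<in> H"
      have "\<psi> ^^ M = (\<psi> ^^ (M mod d)) \<circ> (\<psi> ^^ (d * (M div d)))"
        by (metis funpow_add mult.commute mod_div_mult_eq)
      hence "(\<psi> ^^ M) x = (\<psi> ^^ (M mod d)) x" using mult[OF x] by simp
      thus "(\<psi> ^^ (M mod d)) x = x" using fx x by simp
    qed
    moreover have "M mod d < d" using Pd by simp
    ultimately show False using not_less_Least unfolding d by blast
  qed
  hence "d dvd p ^ K" using pM by auto
  thus ?thesis using divides_primepow_nat[OF pr] unfolding d_def by blast
qed

locale hsetting =
  fixes G :: "('g, 'm) monoid_scheme" (structure)
    and \<phi> :: "'g \<Rightarrow> 'g" and A B :: "'g set" and I :: "'i set"
    and PP :: "'i \<Rightarrow> ('p, 'q) monoid_scheme" and ff :: "'i \<Rightarrow> 'g \<Rightarrow> 'p" and tt :: "'i \<Rightarrow> 'p"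
    and p :: nat and ke :: "'i \<Rightarrow> nat"
  assumes grp: "group G" and fin: "finite (carrier G)" and Asg: "subgroup A G" and Bsg: "subgroup B G"
    and iso: "\<phi> \<in> iso (G\<lparr>carrier := A\<rparr>) (G\<lparr>carrier := B\<rparr>)"
    and finI: "finite I" and pr: "Factorial_Ring.prime p"
    and Pgrp: "\<And>g. g \<in> I \<Longrightarrow> group (PP g)"
    and Pfin: "\<And>g. g \<in> I \<Longrightarrow> finite (carrier (PP g))"
    and Pord: "\<And>g. g \<in> I \<Longrightarrow> order (PP g) = p ^ ke g"
    and ffhom: "\<And>g. g \<in> I \<Longrightarrow> ff g \<in> hom G (PP g)"
    and ttc: "\<And>g. g \<in> I \<Longrightarrow> tt g \<in> carrier (PP g)"
    and ffphi: "\<And>g a. g \<in> I \<Longrightarrow> a \<in> A \<Longrightarrow>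
        ff g (\<phi> a) = inv\<^bsub>PP g\<^esub> (tt g) \<otimes>\<^bsub>PP g\<^esub> ff g a \<otimes>\<^bsub>PP g\<^esub> tt g"
    and ffinj: "\<And>x. x \<in> carrier G \<Longrightarrow> (\<forall>g\<in>I. ff g x = \<one>\<^bsub>PP g\<^esub>) \<Longrightarrow> x = \<one>"
begin

definition pre :: "('i \<Rightarrow> 'p set) \<Rightarrow> 'g set" where
  "pre W = {x \<in> carrier G. \<forall>g\<in>I. ff g x \<in> W g}"

lemma gh: "g \<in> I \<Longrightarrow> group_hom G (PP g) (ff g)"
  unfolding group_hom_def group_hom_axioms_def using grp Pgrp ffhom by auto

lemma ffc: "g \<in> I \<Longrightarrow> x \<in> carrier G \<Longrightarrow> ff g x \<in> carrier (PP g)"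
  using group_hom.hom_closed[OF gh] by blast

lemma Ac: "A \<subseteq> carrier G" by (rule subgroup.subset[OF Asg])
lemma Bc: "B \<subseteq> carrier G" by (rule subgroup.subset[OF Bsg])

lemma pre_sub: "pre W \<subseteq> carrier G" unfolding pre_def by auto

lemma pre_normal:
  assumes W: "\<And>g. g \<in> I \<Longrightarrow> W g \<lhd> PP g"
  shows "pre W \<lhd> G"
proof -
  interpret group G by (rule grp)
  have sg: "\<And>g. g \<in> I \<Longrightarrow> subgroup (W g) (PP g)" using W normal_imp_subgroup by blast
  have sub: "subgroup (pre W) G"
  proof (rule subgroupI)
    show "pre W \<subseteq> carrier G" by (rule pre_sub)
    have "\<one> \<in> pre W" unfolding pre_def
      using group_hom.hom_one[OF gh] subgroup.one_closed[OF sg] by auto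
    thus "pre W \<noteq> {}" by auto
  next
    fix a assume a: "a \<in> pre W"
    hence ac: "a \<in> carrier G" unfolding pre_def by auto
    show "inv a \<in> pre W" unfolding pre_def
      using a ac group_hom.hom_inv[OF gh] subgroup.m_inv_closed[OF sg] unfolding pre_def by auto
  next
    fix a b assume a: "a \<in> pre W" and b: "b \<in> pre W"
    hence ac: "a \<in> carrier G" "b \<in> carrier G" unfolding pre_def by auto
    show "a \<otimes> b \<in> pre W" unfolding pre_def
      using a b ac group_hom.hom_mult[OF gh] subgroup.m_closed[OF sg] unfolding pre_def by auto
  qed
  show ?thesis unfolding normal_inv_iff
  proof (intro conjI ballI sub)
    fix x h assume x: "x \<in> carrier G" and h: "h \<in> pre W"
    hence hc: "h \<in> carrier G" unfolding pre_def by auto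
    have "ff g (x \<otimes> h \<otimes> inv x) \<in> W g" if g: "g \<in> I" for g
    proof -
      have "ff g (x \<otimes> h \<otimes> inv x) = ff g x \<otimes>\<^bsub>PP g\<^esub> ff g h \<otimes>\<^bsub>PP g\<^esub> inv\<^bsub>PP g\<^esub> ff g x"
        using x hc group_hom.hom_mult[OF gh[OF g]] group_hom.hom_inv[OF gh[OF g]] by simp
      moreover have "ff g h \<in> W g" using h g unfolding pre_def by auto
      ultimately show ?thesis using W[OF g] ffc[OF g x] unfolding group.normal_inv_iff[OF Pgrp[OF g]] by simp
    qed
    thus "x \<otimes> h \<otimes> inv x \<in> pre W" unfolding pre_def using x hc by simp
  qed
qed

end



context hsetting begin

lemma phi_facts: "bij_betw \<phi> A B" "\<And>x y. x \<in> A \<Longrightarrow> y \<in> A \<Longrightarrow> \<phi> (x \<otimes> y) = \<phi> x \<otimes> \<phi> y"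
  using iso_sub_facts[OF iso] by auto

lemma pre_iso:
  assumes W: "\<And>g. g \<in> I \<Longrightarrow> W g \<lhd> PP g"
  shows "\<phi> \<in> iso (G\<lparr>carrier := A \<inter> pre W\<rparr>) (G\<lparr>carrier := B \<inter> pre W\<rparr>)"
proof -
  have phiA: "\<phi> ` A = B" and inj: "inj_on \<phi> A" using phi_facts(1) unfolding bij_betw_def by auto
  have fwd: "\<phi> a \<in> B \<inter> pre W" if a: "a \<in> A \<inter> pre W" for a
  proof -
    have aB: "\<phi> a \<in> B" using a phiA by auto
    have ac: "a \<in> carrier G" using a pre_sub by auto
    have "ff g (\<phi> a) \<in> W g" if g: "g \<in> I" for g
    proof -
      interpret P: group "PP g" by (rule Pgrp[OF g])
      have "ff g a \<in> W g" using a g unfolding pre_def by auto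
      have N: "\<And>x h. x \<in> carrier (PP g) \<Longrightarrow> h \<in> W g \<Longrightarrow> x \<otimes>\<^bsub>PP g\<^esub> h \<otimes>\<^bsub>PP g\<^esub> inv\<^bsub>PP g\<^esub> x \<in> W g"
        using W[OF g] unfolding P.normal_inv_iff by blast
      have "inv\<^bsub>PP g\<^esub> (tt g) \<otimes>\<^bsub>PP g\<^esub> ff g a \<otimes>\<^bsub>PP g\<^esub> inv\<^bsub>PP g\<^esub> (inv\<^bsub>PP g\<^esub> (tt g)) \<in> W g"
        by (rule N[OF P.inv_closed[OF ttc[OF g]] \<open>ff g a \<in> W g\<close>])
      thus ?thesis using ffphi[OF g] a ttc[OF g] by simp
    qed
    thus ?thesis using aB Bc unfolding pre_def by auto
  qed
  have bwd: "b \<in> \<phi> ` (A \<inter> pre W)" if b: "b \<in> B \<inter> pre W" for b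
  proof -
    obtain a where a: "a \<in> A" "\<phi> a = b" using b phiA by auto
    have ac: "a \<in> carrier G" using a Ac by auto
    have "ff g a \<in> W g" if g: "g \<in> I" for g
    proof -
      interpret P: group "PP g" by (rule Pgrp[OF g])
      have fb: "ff g b \<in> W g" using b g unfolding pre_def by auto
      have e: "ff g b = inv\<^bsub>PP g\<^esub> (tt g) \<otimes>\<^bsub>PP g\<^esub> ff g a \<otimes>\<^bsub>PP g\<^esub> tt g"
        using ffphi[OF g a(1)] a(2) by simp
      have "tt g \<otimes>\<^bsub>PP g\<^esub> ff g b \<otimes>\<^bsub>PP g\<^esub> inv\<^bsub>PP g\<^esub> (tt g) \<in> W g"
        using W[OF g] ttc[OF g] fb unfolding P.normal_inv_iff by blast
      moreover have "tt g \<otimes>\<^bsub>PP g\<^esub> ff g b \<otimes>\<^bsub>PP g\<^esub> inv\<^bsub>PP g\<^esub> (tt g) = ff g a"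
        unfolding e using ttc[OF g] ffc[OF g ac] by (simp add: P.m_assoc)
      ultimately show ?thesis by simp
    qed
    hence "a \<in> pre W" unfolding pre_def using ac by auto
    thus ?thesis using a by auto
  qed
  have img: "\<phi> ` (A \<inter> pre W) = B \<inter> pre W" using fwd bwd by auto
  have inj': "inj_on \<phi> (A \<inter> pre W)" using inj inj_on_subset by blast
  show ?thesis unfolding iso_def hom_def bij_betw_def
    using img inj' phi_facts(2) by auto
qed

definition Mo :: nat where "Mo = (\<Prod>g\<in>I. order (PP g))"

lemma Mo_pow: "Mo = p ^ (\<Sum>g\<in>I. ke g)"
  unfolding Mo_def power_sum using Pord by simp

lemma Mo_pos: "0 < Mo"
  unfolding Mo_pow using pr by (simp add: prime_gt_0_nat)

lemma pow_Mo: "g \<in> I \<Longrightarrow> c \<in> carrier (PP g) \<Longrightarrow> c [^]\<^bsub>PP g\<^esub> Mo = \<one>\<^bsub>PP g\<^esub>"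
proof -
  assume g: "g \<in> I" and c: "c \<in> carrier (PP g)"
  interpret P: group "PP g" by (rule Pgrp[OF g])
  obtain q where q: "Mo = order (PP g) * q" using dvd_prodI[OF finI g, of "\<lambda>g. order (PP g)"] unfolding Mo_def by (auto elim: dvdE)
  have "c [^]\<^bsub>PP g\<^esub> Mo = (c [^]\<^bsub>PP g\<^esub> order (PP g)) [^]\<^bsub>PP g\<^esub> q" unfolding q using c by (simp add: P.nat_pow_pow)
  thus ?thesis using P.pow_order_eq_1[OF c] by simp
qed

lemma conj_funpow:
  assumes g: "g \<in> I" and c: "c \<in> carrier (PP g)" and v: "v \<in> carrier (PP g)"
  shows "((\<lambda>v. inv\<^bsub>PP g\<^esub> c \<otimes>\<^bsub>PP g\<^esub> v \<otimes>\<^bsub>PP g\<^esub> c) ^^ m) v =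
     inv\<^bsub>PP g\<^esub> (c [^]\<^bsub>PP g\<^esub> m) \<otimes>\<^bsub>PP g\<^esub> v \<otimes>\<^bsub>PP g\<^esub> (c [^]\<^bsub>PP g\<^esub> m)"
proof (induction m)
  interpret P: group "PP g" by (rule Pgrp[OF g])
  case 0 show ?case using v by simp
next
  interpret P: group "PP g" by (rule Pgrp[OF g])
  case (Suc m)
  show ?case using Suc c v by (simp add: P.m_assoc P.inv_mult_group)
qed

lemma conj_funpow_closed:
  assumes g: "g \<in> I" and c: "c \<in> carrier (PP g)" and v: "v \<in> carrier (PP g)"
  shows "((\<lambda>v. inv\<^bsub>PP g\<^esub> c \<otimes>\<^bsub>PP g\<^esub> v \<otimes>\<^bsub>PP g\<^esub> c) ^^ m) v \<in> carrier (PP g)"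
proof -
  interpret P: group "PP g" by (rule Pgrp[OF g])
  show ?thesis unfolding conj_funpow[OF assms] using c v by simp
qed

lemma conj_Mo:
  assumes g: "g \<in> I" and c: "c \<in> carrier (PP g)" and v: "v \<in> carrier (PP g)"
  shows "((\<lambda>v. inv\<^bsub>PP g\<^esub> c \<otimes>\<^bsub>PP g\<^esub> v \<otimes>\<^bsub>PP g\<^esub> c) ^^ Mo) v = v"
proof -
  interpret P: group "PP g" by (rule Pgrp[OF g])
  show ?thesis unfolding conj_funpow[OF assms] pow_Mo[OF g c] using v by simp
qed

end



context hsetting begin

lemma pre_core:
  assumes W2: "\<And>g. g \<in> I \<Longrightarrow> W2 g \<lhd> PP g" and Xi: "Xi \<subseteq> carrier G" and a: "a \<in> A" and b: "b \<in> B"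
  shows "\<exists>k. aut_order (core (sub_quot G A Xi (pre W2)) (sub_quot G B Xi (pre W2))
              (twisted_map G \<phi> A Xi (pre W2) a b)) (twisted_map G \<phi> A Xi (pre W2) a b) = p ^ k"
proof -
  interpret group G by (rule grp)
  define Xj where "Xj = pre W2"
  define \<psi> where "\<psi> = twisted_map G \<phi> A Xi Xj a b"
  define H where "H = core (sub_quot G A Xi Xj) (sub_quot G B Xi Xj) \<psi>"
  have XjN: "Xj \<lhd> G" unfolding Xj_def by (rule pre_normal[OF W2])
  have Xjs: "subgroup Xj G" using XjN by (rule normal_imp_subgroup)
  have ac: "a \<in> carrier G" using a Ac by auto
  have bc: "b \<in> carrier G" using b Bc by auto
  define c where "c g = ff g a \<otimes>\<^bsub>PP g\<^esub> tt g \<otimes>\<^bsub>PP g\<^esub> ff g b" for g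
  define \<kappa> where "\<kappa> g = (\<lambda>v. inv\<^bsub>PP g\<^esub> (c g) \<otimes>\<^bsub>PP g\<^esub> v \<otimes>\<^bsub>PP g\<^esub> c g)" for g
  have cc: "c g \<in> carrier (PP g)" if g: "g \<in> I" for g
    unfolding c_def using monoid.m_closed[OF group.is_monoid[OF Pgrp[OF g]]] ffc[OF g ac] ffc[OF g bc] ttc[OF g] by simp
  have Nrm: "x \<otimes>\<^bsub>PP g\<^esub> h \<otimes>\<^bsub>PP g\<^esub> inv\<^bsub>PP g\<^esub> x \<in> W2 g"
    if "g \<in> I" "x \<in> carrier (PP g)" "h \<in> W2 g" for g x h
    using W2[OF that(1)] that(2,3) unfolding group.normal_inv_iff[OF Pgrp[OF that(1)]] by blast
  have W2s: "subgroup (W2 g) (PP g)" if "g \<in> I" for g using W2[OF that] by (rule normal_imp_subgroup)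
  have memXj: "x \<in> Xj \<longleftrightarrow> x \<in> carrier G \<and> (\<forall>g\<in>I. ff g x \<in> W2 g)" for x
    unfolding Xj_def pre_def by simp
  have step: "\<exists>y'\<in>carrier G. \<psi> D = Xj #> y' \<and> (\<forall>g\<in>I. \<exists>z\<in>carrier (PP g).
        ff g y' = \<kappa> g z \<and> z \<otimes>\<^bsub>PP g\<^esub> inv\<^bsub>PP g\<^esub> (ff g y) \<in> W2 g)"
    if D: "D \<in> sub_quot G A Xi Xj" and y: "y \<in> carrier G" and Dy: "D = Xj #> y" for D y
  proof -
    define x' where "x' = (SOME x. x \<in> A \<inter> Xi \<and> D = Xj #> x)"
    have "\<exists>x. x \<in> A \<inter> Xi \<and> D = Xj #> x" using D unfolding sub_quot_def by auto
    hence x': "x' \<in> A \<inter> Xi \<and> D = Xj #> x'" unfolding x'_def by (rule someI_ex)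
    have x'c: "x' \<in> carrier G" using x' Ac by auto
    define w where "w = inv a \<otimes> x' \<otimes> a"
    have wA: "w \<in> A" unfolding w_def using x' a subgroup.m_closed[OF Asg] subgroup.m_inv_closed[OF Asg] by auto
    have wc: "w \<in> carrier G" using wA Ac by auto
    have phiw: "\<phi> w \<in> carrier G" using wA phi_facts(1) Bc unfolding bij_betw_def by auto
    define y' where "y' = inv b \<otimes> \<phi> w \<otimes> b"
    have y'c: "y' \<in> carrier G" unfolding y'_def using phiw bc by simp
    have psiD: "\<psi> D = Xj #> y'" unfolding \<psi>_def twisted_map_def y'_def w_def x'_def ..
    have "x' \<otimes> inv y \<in> Xj" using x' Dy rcos_eq_iff[OF grp Xjs x'c y] by simp
    hence inW: "ff g (x' \<otimes> inv y) \<in> W2 g" if "g \<in> I" for g using memXj that by blast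
    have "\<exists>z\<in>carrier (PP g). ff g y' = \<kappa> g z \<and> z \<otimes>\<^bsub>PP g\<^esub> inv\<^bsub>PP g\<^esub> (ff g y) \<in> W2 g"
      if g: "g \<in> I" for g
    proof (intro bexI conjI)
      interpret P: group "PP g" by (rule Pgrp[OF g])
      interpret h: group_hom G "PP g" "ff g" by (rule gh[OF g])
      show "ff g x' \<in> carrier (PP g)" using x'c by simp
      show "ff g x' \<otimes>\<^bsub>PP g\<^esub> inv\<^bsub>PP g\<^esub> (ff g y) \<in> W2 g" using inW[OF g] x'c y by simp
      have "ff g y' = inv\<^bsub>PP g\<^esub> (ff g b) \<otimes>\<^bsub>PP g\<^esub> (inv\<^bsub>PP g\<^esub> (tt g) \<otimes>\<^bsub>PP g\<^esub> ff g w \<otimes>\<^bsub>PP g\<^esub> tt g) \<otimes>\<^bsub>PP g\<^esub> ff g b"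
        unfolding y'_def using bc phiw ffphi[OF g wA] by simp
      also have "ff g w = inv\<^bsub>PP g\<^esub> (ff g a) \<otimes>\<^bsub>PP g\<^esub> ff g x' \<otimes>\<^bsub>PP g\<^esub> ff g a"
        unfolding w_def using ac x'c by simp
      finally show "ff g y' = \<kappa> g (ff g x')" unfolding \<kappa>_def c_def
        using ac bc x'c ttc[OF g] by (simp add: P.m_assoc P.inv_mult_group)
    qed
    thus ?thesis using y'c psiD by blast
  qed
  have invar: "\<exists>y\<in>carrier G. (\<psi> ^^ m) C = Xj #> y \<and> (\<forall>g\<in>I. ff g y \<otimes>\<^bsub>PP g\<^esub> inv\<^bsub>PP g\<^esub> ((\<kappa> g ^^ m) (ff g x0)) \<in> W2 g)"
    if C: "C \<in> H" and x0: "x0 \<in> carrier G" and Cx: "C = Xj #> x0" for C x0 m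
  proof (induction m)
    case 0
    have "ff g x0 \<otimes>\<^bsub>PP g\<^esub> inv\<^bsub>PP g\<^esub> ff g x0 \<in> W2 g" if g: "g \<in> I" for g
      using ffc[OF g x0] subgroup.one_closed[OF W2s[OF g]] group.r_inv[OF Pgrp[OF g]] by simp
    thus ?case using x0 Cx by auto
  next
    case (Suc m)
    then obtain y where y: "y \<in> carrier G" "(\<psi> ^^ m) C = Xj #> y"
      "\<forall>g\<in>I. ff g y \<otimes>\<^bsub>PP g\<^esub> inv\<^bsub>PP g\<^esub> ((\<kappa> g ^^ m) (ff g x0)) \<in> W2 g" by blast
    have "(\<psi> ^^ m) C \<in> H" unfolding H_def using C unfolding H_def by (rule core_funpow)
    hence DA: "(\<psi> ^^ m) C \<in> sub_quot G A Xi Xj" unfolding H_def by (rule core_props(2))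
    obtain y' where y': "y' \<in> carrier G" "\<psi> ((\<psi> ^^ m) C) = Xj #> y'"
      "\<forall>g\<in>I. \<exists>z\<in>carrier (PP g). ff g y' = \<kappa> g z \<and> z \<otimes>\<^bsub>PP g\<^esub> inv\<^bsub>PP g\<^esub> (ff g y) \<in> W2 g"
      using step[OF DA y(1) y(2)] by blast
    have "ff g y' \<otimes>\<^bsub>PP g\<^esub> inv\<^bsub>PP g\<^esub> ((\<kappa> g ^^ Suc m) (ff g x0)) \<in> W2 g" if g: "g \<in> I" for g
    proof -
      interpret P: group "PP g" by (rule Pgrp[OF g])
      obtain z where z: "z \<in> carrier (PP g)" "ff g y' = \<kappa> g z" "z \<otimes>\<^bsub>PP g\<^esub> inv\<^bsub>PP g\<^esub> (ff g y) \<in> W2 g"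
        using y'(3) g by blast
      define u where "u = (\<kappa> g ^^ m) (ff g x0)"
      have uc: "u \<in> carrier (PP g)" unfolding u_def \<kappa>_def
        by (rule conj_funpow_closed[OF g cc[OF g] ffc[OF g x0]])
      have fy: "ff g y \<in> carrier (PP g)" using ffc[OF g y(1)] .
      have "z \<otimes>\<^bsub>PP g\<^esub> inv\<^bsub>PP g\<^esub> u = (z \<otimes>\<^bsub>PP g\<^esub> inv\<^bsub>PP g\<^esub> ff g y) \<otimes>\<^bsub>PP g\<^esub> (ff g y \<otimes>\<^bsub>PP g\<^esub> inv\<^bsub>PP g\<^esub> u)"
        using P.diff_split[OF z(1) uc fy] .
      moreover have "ff g y \<otimes>\<^bsub>PP g\<^esub> inv\<^bsub>PP g\<^esub> u \<in> W2 g" using y(3) g unfolding u_def by blast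
      ultimately have zu: "z \<otimes>\<^bsub>PP g\<^esub> inv\<^bsub>PP g\<^esub> u \<in> W2 g" using z(3) subgroup.m_closed[OF W2s[OF g]] by simp
      have "ff g y' \<otimes>\<^bsub>PP g\<^esub> inv\<^bsub>PP g\<^esub> ((\<kappa> g ^^ Suc m) (ff g x0)) =
            inv\<^bsub>PP g\<^esub> (c g) \<otimes>\<^bsub>PP g\<^esub> (z \<otimes>\<^bsub>PP g\<^esub> inv\<^bsub>PP g\<^esub> u) \<otimes>\<^bsub>PP g\<^esub> c g"
        unfolding z(2) funpow.simps o_apply u_def[symmetric] using P.conj_diff[OF z(1) uc cc[OF g]]
        unfolding \<kappa>_def by simp
      also have "\<dots> \<in> W2 g"
        using Nrm[OF g P.inv_closed[OF cc[OF g]] zu] cc[OF g] by simp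
      finally show ?thesis .
    qed
    thus ?case using y' by auto
  qed
  have fixM: "\<forall>C\<in>H. (\<psi> ^^ Mo) C = C"
  proof
    fix C assume C: "C \<in> H"
    hence "C \<in> sub_quot G A Xi Xj" unfolding H_def by (rule core_props(2))
    then obtain x0 where x0: "x0 \<in> A \<inter> Xi" "C = Xj #> x0" unfolding sub_quot_def by auto
    have x0c: "x0 \<in> carrier G" using x0 Ac by auto
    obtain y where y: "y \<in> carrier G" "(\<psi> ^^ Mo) C = Xj #> y"
      "\<forall>g\<in>I. ff g y \<otimes>\<^bsub>PP g\<^esub> inv\<^bsub>PP g\<^esub> ((\<kappa> g ^^ Mo) (ff g x0)) \<in> W2 g"
      using invar[OF C x0c x0(2)] by blast
    have "ff g (y \<otimes> inv x0) \<in> W2 g" if g: "g \<in> I" for g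
    proof -
      have "(\<kappa> g ^^ Mo) (ff g x0) = ff g x0" unfolding \<kappa>_def
        by (rule conj_Mo[OF g cc[OF g] ffc[OF g x0c]])
      moreover have "ff g y \<otimes>\<^bsub>PP g\<^esub> inv\<^bsub>PP g\<^esub> ((\<kappa> g ^^ Mo) (ff g x0)) \<in> W2 g" using y(3) g by blast
      ultimately show ?thesis using y(1) x0c group_hom.hom_mult[OF gh[OF g]] group_hom.hom_inv[OF gh[OF g]] by simp
    qed
    hence "y \<otimes> inv x0 \<in> Xj" using memXj y(1) x0c by simp
    hence "Xj #> y = Xj #> x0" using rcos_eq_iff[OF grp Xjs y(1) x0c] by simp
    thus "(\<psi> ^^ Mo) C = C" using y(2) x0(2) by simp
  qed
  have "\<exists>k. aut_order H \<psi> = p ^ k" by (rule aut_order_ppow[OF Mo_pos fixM Mo_pow pr])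
  thus ?thesis unfolding H_def \<psi>_def Xj_def .
qed

end



context hsetting begin

definition Lk :: "nat \<Rightarrow> 'g set" where "Lk k = pre (\<lambda>g. ucs (PP g) k)"

lemma ucsN: "g \<in> I \<Longrightarrow> ucs (PP g) k \<lhd> PP g" using ucs_normal Pgrp by blast

lemma Lk_normal: "Lk k \<lhd> G" unfolding Lk_def by (rule pre_normal[OF ucsN])

lemma Lk_sub: "Lk k \<subseteq> carrier G" unfolding Lk_def by (rule pre_sub)

lemma Lk_iso: "\<phi> \<in> iso (G\<lparr>carrier := A \<inter> Lk k\<rparr>) (G\<lparr>carrier := B \<inter> Lk k\<rparr>)"
  unfolding Lk_def by (rule pre_iso[OF ucsN])

lemma Lk_core:
  assumes "a \<in> A" "b \<in> B"
  shows "\<exists>k. aut_order (core (sub_quot G A (Lk i) (Lk j)) (sub_quot G B (Lk i) (Lk j))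
              (twisted_map G \<phi> A (Lk i) (Lk j) a b)) (twisted_map G \<phi> A (Lk i) (Lk j) a b) = p ^ k"
  unfolding Lk_def[of j] by (rule pre_core[OF ucsN Lk_sub assms])

lemma Lk0: "Lk 0 = {\<one>}"
proof
  show "Lk 0 \<subseteq> {\<one>}"
  proof
    fix x assume "x \<in> Lk 0"
    hence "x \<in> carrier G" "\<forall>g\<in>I. ff g x = \<one>\<^bsub>PP g\<^esub>" unfolding Lk_def pre_def by auto
    thus "x \<in> {\<one>}" using ffinj by auto
  qed
  show "{\<one>} \<subseteq> Lk 0" unfolding Lk_def pre_def
    using group_hom.hom_one[OF gh] group.is_monoid[OF grp] monoid.one_closed by auto
qed

lemma Lk_mono: "k \<le> l \<Longrightarrow> Lk k \<subseteq> Lk l"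
  unfolding Lk_def pre_def using ucs_mono[OF Pgrp] by blast

lemma Lk_top: "Lk Mo = carrier G"
proof
  show "Lk Mo \<subseteq> carrier G" by (rule Lk_sub)
  show "carrier G \<subseteq> Lk Mo"
  proof
    fix x assume x: "x \<in> carrier G"
    have "ff g x \<in> ucs (PP g) Mo" if g: "g \<in> I" for g
    proof -
      have "order (PP g) dvd Mo" unfolding Mo_def by (rule dvd_prodI[OF finI g])
      hence "order (PP g) \<le> Mo" using Mo_pos by (simp add: dvd_imp_le)
      hence "ucs (PP g) (order (PP g)) \<subseteq> ucs (PP g) Mo" by (rule ucs_mono[OF Pgrp[OF g]])
      moreover have "ucs (PP g) (order (PP g)) = carrier (PP g)"
        by (rule ucs_top[OF Pgrp[OF g] Pfin[OF g] Pord[OF g] pr])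
      ultimately show ?thesis using ffc[OF g x] by auto
    qed
    thus "x \<in> Lk Mo" unfolding Lk_def pre_def using x by auto
  qed
qed

lemma Lk_central:
  assumes x: "x \<in> Lk (Suc k)" and y: "y \<in> carrier G"
  shows "Lk k #> (x \<otimes> y) = Lk k #> (y \<otimes> x)"
proof -
  interpret group G by (rule grp)
  have xc: "x \<in> carrier G" using x Lk_sub by auto
  have "ff g ((x \<otimes> y) \<otimes> inv (y \<otimes> x)) \<in> ucs (PP g) k" if g: "g \<in> I" for g
  proof -
    interpret P: group "PP g" by (rule Pgrp[OF g])
    interpret h: group_hom G "PP g" "ff g" by (rule gh[OF g])
    have "ff g x \<in> zcen (PP g) (ucs (PP g) k)" using x g unfolding Lk_def pre_def by simp
    hence "ucs (PP g) k #>\<^bsub>PP g\<^esub> (ff g x \<otimes>\<^bsub>PP g\<^esub> ff g y) = ucs (PP g) k #>\<^bsub>PP g\<^esub> (ff g y \<otimes>\<^bsub>PP g\<^esub> ff g x)"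
      unfolding zcen_def using y by simp
    hence "(ff g x \<otimes>\<^bsub>PP g\<^esub> ff g y) \<otimes>\<^bsub>PP g\<^esub> inv\<^bsub>PP g\<^esub> (ff g y \<otimes>\<^bsub>PP g\<^esub> ff g x) \<in> ucs (PP g) k"
      using rcos_eq_iff[OF Pgrp[OF g] normal_imp_subgroup[OF ucsN[OF g]]] xc y by simp
    thus ?thesis using xc y by simp
  qed
  hence "(x \<otimes> y) \<otimes> inv (y \<otimes> x) \<in> Lk k" unfolding Lk_def pre_def using xc y by simp
  thus ?thesis using rcos_eq_iff[OF grp normal_imp_subgroup[OF Lk_normal]] xc y by simp
qed

definition nu :: "nat \<Rightarrow> nat" where "nu k = (LEAST k'. Lk k' = Lk k)"

lemma nu_eq: "Lk (nu k) = Lk k" unfolding nu_def by (rule LeastI[of _ k]) simp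
lemma nu_le: "nu k \<le> k" unfolding nu_def by (rule Least_le) simp
lemma nu_less: "k' < nu k \<Longrightarrow> Lk k' \<noteq> Lk k" unfolding nu_def by (rule not_less_Least)

primrec kap :: "nat \<Rightarrow> nat" where
  "kap 0 = Mo"
| "kap (Suc i) = nu (kap i) - 1"

lemma kap_le: "kap i \<le> Mo - i"
proof (induction i)
  case (Suc i) thus ?case using nu_le[of "kap i"] by simp
qed simp

definition Gs :: "nat \<Rightarrow> 'g set" where "Gs i = Lk (kap (i - 1))"

definition lstop :: nat where "lstop = (LEAST i. Lk (kap i) = {\<one>})"

lemma lstop: "Lk (kap lstop) = {\<one>}"
proof -
  have "kap Mo = 0" using kap_le[of Mo] by simp
  hence "Lk (kap Mo) = {\<one>}" using Lk0 by simp
  thus ?thesis unfolding lstop_def by (rule LeastI)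
qed

lemma before_lstop: "i < lstop \<Longrightarrow> Lk (kap i) \<noteq> {\<one>}"
  unfolding lstop_def by (rule not_less_Least)

lemma after_lstop: "lstop \<le> j \<Longrightarrow> Lk (kap j) = {\<one>}"
proof (induction j rule: dec_induct)
  case base show ?case by (rule lstop)
next
  case (step j)
  have "Lk 0 = Lk (kap j)" using step Lk0 by simp
  hence "nu (kap j) \<le> 0" unfolding nu_def by (rule Least_le)
  thus ?case using Lk0 by simp
qed

lemma nu_pos: "Lk k \<noteq> {\<one>} \<Longrightarrow> nu k \<noteq> 0"
  using nu_eq[of k] Lk0 by auto

lemma Gs_Suc: "Gs (Suc i) = Lk (kap i)" unfolding Gs_def by simp

theorem main_locale:
  "\<exists>Gs n. central_filtration G Gs n \<and> compatible G \<phi> A B Gs \<and>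
           (\<forall>i j a b. 1 \<le> i \<longrightarrow> i < j \<longrightarrow> a \<in> A \<inter> Gs i \<longrightarrow> b \<in> B \<inter> Gs i \<longrightarrow>
              (\<exists>k. aut_order
                     (core (sub_quot G A (Gs i) (Gs j)) (sub_quot G B (Gs i) (Gs j))
                           (twisted_map G \<phi> A (Gs i) (Gs j) a b))
                     (twisted_map G \<phi> A (Gs i) (Gs j) a b) = p ^ k))"
proof (intro exI conjI)
  interpret group G by (rule grp)
  let ?n = "Suc lstop"
  have GsL: "\<exists>k. Gs i = Lk k" for i unfolding Gs_def by blast
  have filt: "filtration G Gs ?n" unfolding filtration_def
  proof (intro conjI allI impI)
    show "1 \<le> ?n" by simp
    show "Gs 1 = carrier G" unfolding Gs_def using Lk_top by simp
    show "Gs ?n = {\<one>}" using Gs_Suc lstop by simp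
    fix i
    show "1 \<le> i \<Longrightarrow> Gs i \<lhd> G" using GsL Lk_normal by metis
    show "?n < i \<Longrightarrow> Gs i = {\<one>}"
    proof -
      assume "?n < i"
      then obtain i' where "i = Suc i'" "lstop \<le> i'" by (cases i) auto
      thus "Gs i = {\<one>}" using Gs_Suc after_lstop by simp
    qed
    show "1 \<le> i \<and> i < ?n \<Longrightarrow> Gs (Suc i) \<subset> Gs i"
    proof -
      assume "1 \<le> i \<and> i < ?n"
      then obtain i' where i': "i = Suc i'" "i' < lstop" by (cases i) auto
      have ne: "Lk (kap i') \<noteq> {\<one>}" by (rule before_lstop[OF i'(2)])
      define \<nu> where "\<nu> = nu (kap i')"
      have nu0: "\<nu> \<noteq> 0" unfolding \<nu>_def by (rule nu_pos[OF ne])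
      have "Gs (Suc i) = Lk (\<nu> - 1)" unfolding i'(1) Gs_Suc \<nu>_def by simp
      moreover have "Gs i = Lk (kap i')" unfolding i'(1) Gs_Suc ..
      moreover have "Lk (\<nu> - 1) \<subseteq> Lk \<nu>" by (rule Lk_mono) simp
      moreover have "Lk \<nu> = Lk (kap i')" unfolding \<nu>_def by (rule nu_eq)
      moreover have "Lk (\<nu> - 1) \<noteq> Lk (kap i')" unfolding \<nu>_def by (rule nu_less) (use nu0 \<nu>_def in simp)
      ultimately show "Gs (Suc i) \<subset> Gs i" by auto
    qed
  qed
  show "central_filtration G Gs ?n" unfolding central_filtration_def
  proof (intro conjI allI impI ballI)
    show "filtration G Gs ?n" by (rule filt)
    fix i x g assume i: "1 \<le> i" and x: "x \<in> Gs i" and g: "g \<in> carrier G"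
    obtain i' where i': "i = Suc i'" using i by (cases i) auto
    define \<nu> where "\<nu> = nu (kap i')"
    have GsS: "Gs (Suc i) = Lk (\<nu> - 1)" unfolding i' Gs_Suc \<nu>_def by simp
    have xL: "x \<in> Lk \<nu>" using x unfolding i' Gs_Suc \<nu>_def nu_eq .
    show "Gs (Suc i) #> (x \<otimes> g) = Gs (Suc i) #> (g \<otimes> x)"
    proof (cases \<nu>)
      case 0
      hence "x = \<one>" using xL Lk0 by simp
      thus ?thesis using g by simp
    next
      case (Suc m)
      thus ?thesis unfolding GsS using Lk_central[of x m g] xL g by simp
    qed
  qed
  show "compatible G \<phi> A B Gs" unfolding compatible_def using GsL Lk_iso by metis
  show "\<forall>i j a b. 1 \<le> i \<longrightarrow> i < j \<longrightarrow> a \<in> A \<inter> Gs i \<longrightarrow> b \<in> B \<inter> Gs i \<longrightarrow>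
              (\<exists>k. aut_order
                     (core (sub_quot G A (Gs i) (Gs j)) (sub_quot G B (Gs i) (Gs j))
                           (twisted_map G \<phi> A (Gs i) (Gs j) a b))
                     (twisted_map G \<phi> A (Gs i) (Gs j) a b) = p ^ k)"
  proof (intro allI impI)
    fix i j a b assume "a \<in> A \<inter> Gs i" "b \<in> B \<inter> Gs i"
    moreover obtain ki kj where "Gs i = Lk ki" "Gs j = Lk kj" using GsL by metis
    ultimately show "\<exists>k. aut_order
                     (core (sub_quot G A (Gs i) (Gs j)) (sub_quot G B (Gs i) (Gs j))
                           (twisted_map G \<phi> A (Gs i) (Gs j) a b))
                     (twisted_map G \<phi> A (Gs i) (Gs j) a b) = p ^ k"
      using Lk_core[of a b ki kj] by simp
  qed
qed

end



theorem proposition1p4: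
  fixes p :: nat and G :: "('g, 'm) monoid_scheme" and \<phi> :: "'g \<Rightarrow> 'g" and A B :: "'g set"
  assumes "Factorial_Ring.prime p"
    and "group G" and "finite (carrier G)" and "\<exists>k. order G = p ^ k"
    and "subgroup A G" and "subgroup B G"
    and "\<phi> \<in> iso (G\<lparr>carrier := A\<rparr>) (G\<lparr>carrier := B\<rparr>)"
    and "residually_p p (HNN G \<phi> A)"
  shows "\<exists>Gs n. central_filtration G Gs n \<and> compatible G \<phi> A B Gs \<and>
           (\<forall>i j a b. 1 \<le> i \<longrightarrow> i < j \<longrightarrow> a \<in> A \<inter> Gs i \<longrightarrow> b \<in> B \<inter> Gs i \<longrightarrow>
              (\<exists>k. aut_order
                     (core (sub_quot G A (Gs i) (Gs j)) (sub_quot G B (Gs i) (Gs j))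
                           (twisted_map G \<phi> A (Gs i) (Gs j) a b))
                     (twisted_map G \<phi> A (Gs i) (Gs j) a b) = p ^ k))"
proof -
  note pr = assms(1) and grp = assms(2) and fin = assms(3) and Asg = assms(5) and Bsg = assms(6)
    and iso = assms(7) and res = assms(8)
  interpret group G by (rule grp)
  define I where "I = carrier G - {\<one>\<^bsub>G\<^esub>}"
  have Ac: "A \<subseteq> carrier G" by (rule subgroup.subset[OF Asg])
  have Bc: "B \<subseteq> carrier G" by (rule subgroup.subset[OF Bsg])
  have phiA: "\<phi> a \<in> carrier G" if "a \<in> A" for a
    using iso_sub_facts(1)[OF iso] that Bc unfolding bij_betw_def by auto
  let ?c = "cls G \<phi> A"
  have nontriv: "?c [Gen g] \<in> carrier (HNN G \<phi> A) \<and> ?c [Gen g] \<noteq> \<one>\<^bsub>HNN G \<phi> A\<^esub>" if g: "g \<in> I" for g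
  proof
    show "?c [Gen g] \<in> carrier (HNN G \<phi> A)" unfolding HNN_simps using g I_def by auto
    show "?c [Gen g] \<noteq> \<one>\<^bsub>HNN G \<phi> A\<^esub>"
    proof
      assume "?c [Gen g] = \<one>\<^bsub>HNN G \<phi> A\<^esub>"
      hence "[Gen g] \<in> ?c []" using cls_self[of "[Gen g]" G \<phi> A] unfolding HNN_simps by simp
      hence "([], [Gen g]) \<in> hnn_rel G \<phi> A" unfolding cls_def by simp
      hence "([Gen g], []) \<in> hnn_rel G \<phi> A" by (rule hnn_rel.sym)
      hence "g = \<one>\<^bsub>G\<^esub>" using hnn_gen_inj[OF grp fin Asg Bsg iso] g I_def by blast
      thus False using g I_def by simp
    qed
  qed
  have "\<forall>g\<in>I. \<exists>(P :: 'g hnn_letter list set set monoid) h. group P \<and> finite (carrier P) \<and> (\<exists>k. order P = p ^ k)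
            \<and> h \<in> hom (HNN G \<phi> A) P \<and> h (?c [Gen g]) \<noteq> \<one>\<^bsub>P\<^esub>"
    using res nontriv unfolding residually_p_def by blast
  hence "\<exists>PP :: 'g \<Rightarrow> 'g hnn_letter list set set monoid. \<forall>g\<in>I. \<exists>h. group (PP g) \<and> finite (carrier (PP g)) \<and> (\<exists>k. order (PP g) = p ^ k)
            \<and> h \<in> hom (HNN G \<phi> A) (PP g) \<and> h (?c [Gen g]) \<noteq> \<one>\<^bsub>PP g\<^esub>" by (rule bchoice)
  then obtain PP :: "'g \<Rightarrow> 'g hnn_letter list set set monoid" where PP: "\<forall>g\<in>I. \<exists>h. group (PP g) \<and> finite (carrier (PP g)) \<and> (\<exists>k. order (PP g) = p ^ k)
            \<and> h \<in> hom (HNN G \<phi> A) (PP g) \<and> h (?c [Gen g]) \<noteq> \<one>\<^bsub>PP g\<^esub>"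
    by blast
  hence "\<exists>hh :: 'g \<Rightarrow> 'g hnn_letter list set \<Rightarrow> 'g hnn_letter list set set. \<forall>g\<in>I. group (PP g) \<and> finite (carrier (PP g)) \<and> (\<exists>k. order (PP g) = p ^ k)
            \<and> hh g \<in> hom (HNN G \<phi> A) (PP g) \<and> hh g (?c [Gen g]) \<noteq> \<one>\<^bsub>PP g\<^esub>" by (rule bchoice)
  then obtain hh :: "'g \<Rightarrow> 'g hnn_letter list set \<Rightarrow> 'g hnn_letter list set set" where PH: "\<And>g. g \<in> I \<Longrightarrow> group (PP g) \<and> finite (carrier (PP g)) \<and> (\<exists>k. order (PP g) = p ^ k)
            \<and> hh g \<in> hom (HNN G \<phi> A) (PP g) \<and> hh g (?c [Gen g]) \<noteq> \<one>\<^bsub>PP g\<^esub>"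
    by blast
  define ke where "ke g = (SOME k. order (PP g) = p ^ k)" for g
  define ff where "ff g x = hh g (?c [Gen x])" for g x
  define tt where "tt g = hh g (?c [Tl])" for g
  have Pgrp: "\<And>g. g \<in> I \<Longrightarrow> group (PP g)" using PH by blast
  have hhom: "\<And>g. g \<in> I \<Longrightarrow> hh g \<in> hom (HNN G \<phi> A) (PP g)" using PH by blast
  interpret hs: hsetting G \<phi> A B I PP ff tt p ke
  proof (rule hsetting.intro)
    show "group G" by fact
    show "finite (carrier G)" by fact
    show "subgroup A G" by fact
    show "subgroup B G" by fact
    show "\<phi> \<in> iso (G\<lparr>carrier := A\<rparr>) (G\<lparr>carrier := B\<rparr>)" by fact
    show "Factorial_Ring.prime p" by fact
    show "finite I" unfolding I_def using fin by simp
    fix g assume g: "g \<in> I"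
    show "group (PP g)" using PH g by blast
    show "finite (carrier (PP g))" using PH g by blast
    show "order (PP g) = p ^ ke g" unfolding ke_def using PH[OF g] by (metis (mono_tags) someI_ex)
    note hf = hom_HNN[OF Pgrp[OF g] hhom[OF g] Ac phiA]
    show "ff g \<in> hom G (PP g)" unfolding hom_def ff_def using hf(1,3) by auto
    show "tt g \<in> carrier (PP g)" unfolding tt_def by (rule hf(2))
    fix a assume "a \<in> A"
    thus "ff g (\<phi> a) = inv\<^bsub>PP g\<^esub> (tt g) \<otimes>\<^bsub>PP g\<^esub> ff g a \<otimes>\<^bsub>PP g\<^esub> tt g"
      unfolding ff_def tt_def using hf(4) by simp
  next
    fix x assume x: "x \<in> carrier G" and all: "\<forall>g\<in>I. ff g x = \<one>\<^bsub>PP g\<^esub>"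
    show "x = \<one>\<^bsub>G\<^esub>"
    proof (rule ccontr)
      assume "x \<noteq> \<one>\<^bsub>G\<^esub>"
      hence "x \<in> I" using x I_def by simp
      thus False using PH[of x] all unfolding ff_def by auto
    qed
  qed
  show ?thesis by (rule hs.main_locale)
qed


end
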